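(* Consider the control problem described in the context, let $\mathbf u^0(\cdot)\in\mathfrak U$ be an optimal control, and assume the problem is regular for $\mathbf u^0$. For $k=1,\dots,N$ let $\boldsymbol\theta_k$ be the solution of $$\tfrac{d}{dt}\boldsymbol\theta_k=-A^{\top}(t)\boldsymbol\theta_k,\qquad \boldsymbol\theta_k(1)=\nabla h_k\big(\mathbf z^{(k)}_{u^0}\big),$$ and set $\boldsymbol\theta(t)=\sum_{k=1}^N\chi_k(t)\boldsymbol\theta_k(t)$, where $\chi_k$ is the indicator function of $[t_{k-1},t_k)$. Then for almost all $t\in[0,1]$ $$\langle\boldsymbol\theta(t),B(t)\mathbf u^0(t)\rangle=\max_{\mathbf v\in\mathbf V}\langle\boldsymbol\theta(t),B(t)\mathbf v\rangle .$$
   Context: Let $(\Omega,\mathfrak F,\mathbf P)$ be a complete probability space, $\xi_1,\dots,\xi_N$ real random variables on it, and $0=t_0<t_1<\dots<t_N=1$. Define $\xi(t,\omega)=\xi_i(\omega)$ for $t\in[t_{i-1},t_i)$. Let $A(t)$, $B(t)$, $\mathbf f(t)$ be deterministic matrices of sizes $n\times n$, $n\times m$, $n\times1$ with Lebesgue-summable entries on $[0,1]$, entries of $B$ square-summable; $\mathbf x_0\in\mathbb R^n$ nonrandom; $\mathbf Q\subset\mathbb R^n$ a nonrandom Borel set. For a measurable deterministic control $\mathbf u(\cdot)\in L_2^m[0,1]$, $\mathbf x_u$ solves $\frac{d}{dt}\mathbf x=A(t)\mathbf x+\xi(t)B(t)\mathbf u(t)+\mathbf f(t)$, $\mathbf x(0)=\mathbf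 x_0$, and $\varphi(\mathbf u(\cdot))=\mathbf P(\mathbf x_u(1)\in\mathbf Q)$ is to be maximized over the set $\mathfrak U$ of admissible controls, i.e. measurable functions $[0,1]\to\mathbf V$ (in $L_2^m[0,1]$), $\mathbf V\subset\mathbb R^m$ fixed. Let $\Phi(t)$ be the fundamental matrix of $\dot{\mathbf x}=A(t)\mathbf x$ with $\Phi(0)=I$; put $\hat{\mathbf x}_0=\Phi(1)\big(\mathbf x_0+\int_0^1\Phi^{-1}(s)\mathbf f(s)ds\big)$ and $\mathbf z_u^{(i)}=\Phi(1)\int_{t_{i-1}}^{t_i}\Phi^{-1}(s)B(s)\mathbf u(s)\,ds$, so $\mathbf x_u(1)=\hat{\mathbf x}_0+\sum_i\xi_i\mathbf z_u^{(i)}$. For a control $\mathbf u^*$ and $k=1,\dots,N$ define $h_k:\mathbb R^n\to[0,1]$ by $h_k(\mathbf z)=\mathbf P\big(\hat{\mathbf x}_0+\sum_{i\neq k}\xi_i\mathbf z^{(i)}_{u^*}+\xi_k\mathbf z\in\mathbf Q\big)$. The problem is called regular for the control $\mathbf u^*$ if for every $k=1,\dots,N$ the function $h_k$ (built from $\mathbf u^*$) is (Fréchet) differentiable at the point $\mathbf z^{(k)}_{u^*}$; $\nabla h_k$ denotes its gradient. $A^\top$ is the transpose of $A$ and $\langle\cdot,\cdot\rangle$ the Euclidean inner product. *)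

theory Defs
  imports "HOL-Probability.Probability"
begin

text \<open>Fundamental matrix of dx/dt = A(t) x with Phi(0) = I, in the Caratheodory
  sense: continuous on [0,1] and satisfying the integral equation.\<close>
definition is_fundamental_matrix ::
  "(real \<Rightarrow> real^'n^'n) \<Rightarrow> (real \<Rightarrow> real^'n^'n) \<Rightarrow> bool" where
  "is_fundamental_matrix A Phi \<longleftrightarrow>
     continuous_on {0..1} Phi \<and>
     (\<forall>t\<in>{0..1}. Phi t = mat 1 + (LINT s:{0..t}|lebesgue. A s ** Phi s))"

definition is_adjoint_solution ::
  "(real \<Rightarrow> real^'n^'n) \<Rightarrow> real^'n \<Rightarrow> (real \<Rightarrow> real^'n) \<Rightarrow> bool" where
  "is_adjoint_solution A g theta \<longleftrightarrow>
     continuous_on {0..1} theta \<and>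
     (\<forall>t\<in>{0..1}. theta t = g + (LINT s:{t..1}|lebesgue. transpose (A s) *v theta s))"

definition xhat0 ::
  "(real \<Rightarrow> real^'n^'n) \<Rightarrow> (real \<Rightarrow> real^'n) \<Rightarrow> real^'n \<Rightarrow> real^'n" where
  "xhat0 Phi f x0 = Phi 1 *v (x0 + (LINT s:{0..1}|lebesgue. matrix_inv (Phi s) *v f s))"

definition zvec ::
  "(real \<Rightarrow> real^'n^'n) \<Rightarrow> (real \<Rightarrow> real^'m^'n) \<Rightarrow> (nat \<Rightarrow> real)
     \<Rightarrow> (real \<Rightarrow> real^'m) \<Rightarrow> nat \<Rightarrow> real^'n" where
  "zvec Phi B ts u i =
     Phi 1 *v (LINT s:{ts (i - 1)..<ts i}|lebesgue. (matrix_inv (Phi s) ** B s) *v u s)"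

definition x_end ::
  "nat \<Rightarrow> (nat \<Rightarrow> 'w \<Rightarrow> real) \<Rightarrow> (nat \<Rightarrow> real) \<Rightarrow> (real \<Rightarrow> real^'n^'n)
     \<Rightarrow> (real \<Rightarrow> real^'m^'n) \<Rightarrow> (real \<Rightarrow> real^'n) \<Rightarrow> real^'n
     \<Rightarrow> (real \<Rightarrow> real^'m) \<Rightarrow> 'w \<Rightarrow> real^'n" where
  "x_end N xi ts Phi B f x0 u \<omega> =
     xhat0 Phi f x0 + (\<Sum>i\<in>{1..N}. xi i \<omega> *\<^sub>R zvec Phi B ts u i)"

definition objective ::
  "'w measure \<Rightarrow> nat \<Rightarrow> (nat \<Rightarrow> 'w \<Rightarrow> real) \<Rightarrow> (nat \<Rightarrow> real) \<Rightarrow> (real \<Rightarrow> real^'n^'n)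
     \<Rightarrow> (real \<Rightarrow> real^'m^'n) \<Rightarrow> (real \<Rightarrow> real^'n) \<Rightarrow> real^'n \<Rightarrow> (real^'n) set
     \<Rightarrow> (real \<Rightarrow> real^'m) \<Rightarrow> real" where
  "objective M N xi ts Phi B f x0 Q u =
     measure M {\<omega> \<in> space M. x_end N xi ts Phi B f x0 u \<omega> \<in> Q}"

definition hfun ::
  "'w measure \<Rightarrow> nat \<Rightarrow> (nat \<Rightarrow> 'w \<Rightarrow> real) \<Rightarrow> (nat \<Rightarrow> real) \<Rightarrow> (real \<Rightarrow> real^'n^'n)
     \<Rightarrow> (real \<Rightarrow> real^'m^'n) \<Rightarrow> (real \<Rightarrow> real^'n) \<Rightarrow> real^'n \<Rightarrow> (real^'n) set
     \<Rightarrow> (real \<Rightarrow> real^'m) \<Rightarrow> nat \<Rightarrow> real^'n \<Rightarrow> real" where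
  "hfun M N xi ts Phi B f x0 Q u k z =
     measure M {\<omega> \<in> space M.
        xhat0 Phi f x0 + (\<Sum>i\<in>{1..N} - {k}. xi i \<omega> *\<^sub>R zvec Phi B ts u i)
          + xi k \<omega> *\<^sub>R z \<in> Q}"

definition admissible :: "(real^'m) set \<Rightarrow> (real \<Rightarrow> real^'m) \<Rightarrow> bool" where
  "admissible V u \<longleftrightarrow>
     (\<forall>t\<in>{0..1}. u t \<in> V) \<and> set_borel_measurable lebesgue {0..1} u \<and>
     set_integrable lebesgue {0..1} (\<lambda>t. (norm (u t))\<^sup>2)"

definition gradient :: "('a::real_inner \<Rightarrow> real) \<Rightarrow> 'a \<Rightarrow> 'a" where
  "gradient h z = (THE g. (h has_derivative (\<lambda>v. g \<bullet> v)) (at z))"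

definition regular_for ::
  "'w measure \<Rightarrow> nat \<Rightarrow> (nat \<Rightarrow> 'w \<Rightarrow> real) \<Rightarrow> (nat \<Rightarrow> real) \<Rightarrow> (real \<Rightarrow> real^'n^'n)
     \<Rightarrow> (real \<Rightarrow> real^'m^'n) \<Rightarrow> (real \<Rightarrow> real^'n) \<Rightarrow> real^'n \<Rightarrow> (real^'n) set
     \<Rightarrow> (real \<Rightarrow> real^'m) \<Rightarrow> bool" where
  "regular_for M N xi ts Phi B f x0 Q u \<longleftrightarrow>
     (\<forall>k\<in>{1..N}. hfun M N xi ts Phi B f x0 Q u k differentiable (at (zvec Phi B ts u k)))"

end

theory Submission
  imports Defs
begin

lemma abs_int_vec:
  fixes f :: "'a::euclidean_space \<Rightarrow> 'b::euclidean_space ^'n"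
  assumes "\<And>i. (\<lambda>s. f s $ i) absolutely_integrable_on S"
  shows "f absolutely_integrable_on S"
proof (subst absolutely_integrable_componentwise_iff, intro ballI)
  fix b :: "'b^'n" assume "b \<in> Basis"
  then obtain i u where b: "b = axis i u" and u: "u \<in> Basis" by (auto simp: Basis_vec_def)
  have "(\<lambda>s. f s $ i \<bullet> u) absolutely_integrable_on S"
    using absolutely_integrable_componentwise_iff[THEN iffD1, OF assms[of i]] u by auto
  then show "(\<lambda>x. f x \<bullet> b) absolutely_integrable_on S" by (simp add: b inner_axis)
qed

lemma abs_int_nth:
  fixes f :: "'a::euclidean_space \<Rightarrow> 'b::euclidean_space ^'n"
  assumes "f absolutely_integrable_on S"
  shows "(\<lambda>s. f s $ i) absolutely_integrable_on S"
proof (subst absolutely_integrable_componentwise_iff, intro ballI)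
  fix b :: 'b assume b: "b \<in> Basis"
  have "\<forall>b\<in>Basis. (\<lambda>x. f x \<bullet> b) absolutely_integrable_on S"
    using absolutely_integrable_componentwise_iff[THEN iffD1, OF assms] by auto
  moreover have "axis i b \<in> Basis" using b by (auto simp: Basis_vec_def)
  ultimately have "(\<lambda>x. f x \<bullet> axis i b) absolutely_integrable_on S" by blast
  then show "(\<lambda>x. f x $ i \<bullet> b) absolutely_integrable_on S" by (simp add: inner_axis)
qed

lemma mv_bound:
  fixes A :: "real^'n^'m"
  shows "norm (A *v x) \<le> (\<Sum>i\<in>UNIV. \<Sum>j\<in>UNIV. \<bar>A $ i $ j\<bar>) * norm x"
proof -
  have "norm (A *v x) \<le> (\<Sum>i\<in>UNIV. \<bar>(A *v x) $ i\<bar>)"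
    by (rule norm_le_l1_cart)
  also have "\<dots> \<le> (\<Sum>i\<in>UNIV. \<Sum>j\<in>UNIV. \<bar>A $ i $ j\<bar> * norm x)"
  proof (rule sum_mono)
    fix i
    have "\<bar>(A *v x) $ i\<bar> \<le> \<bar>\<Sum>j\<in>UNIV. A $ i $ j * x $ j\<bar>"
      by (simp add: matrix_vector_mult_def)
    also have "\<dots> \<le> (\<Sum>j\<in>UNIV. \<bar>A $ i $ j * x $ j\<bar>)"
      by (rule sum_abs)
    also have "\<dots> \<le> (\<Sum>j\<in>UNIV. \<bar>A $ i $ j\<bar> * norm x)"
      by (rule sum_mono) (simp add: abs_mult component_le_norm_cart mult_left_mono)
    finally show "\<bar>(A *v x) $ i\<bar> \<le> (\<Sum>j\<in>UNIV. \<bar>A $ i $ j\<bar> * norm x)" .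
  qed
  finally show ?thesis by (simp add: sum_distrib_right)
qed

lemma mv_bound2:
  fixes A :: "real^'n^'m"
  shows "norm (A *v x) \<le> (real CARD('m) * real CARD('n) * norm A) * norm x"
proof -
  have "(\<Sum>i\<in>UNIV. \<Sum>j\<in>UNIV. \<bar>A $ i $ j\<bar>) \<le> (\<Sum>i\<in>(UNIV::'m set). \<Sum>j\<in>(UNIV::'n set). norm A)"
  proof (intro sum_mono)
    fix i j
    show "\<bar>A $ i $ j\<bar> \<le> norm A"
      using Finite_Cartesian_Product.norm_nth_le[of "A$i" j] Finite_Cartesian_Product.norm_nth_le[of A i] by simp
  qed
  also have "\<dots> = real CARD('m) * real CARD('n) * norm A" by simp
  finally have "(\<Sum>i\<in>UNIV. \<Sum>j\<in>UNIV. \<bar>A $ i $ j\<bar>) * norm x \<le> (real CARD('m) * real CARD('n) * norm A) * norm x"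
    by (rule mult_right_mono) simp
  then show ?thesis using mv_bound[of A x] by linarith
qed

lemma lin_mv1: "linear (\<lambda>M::real^'n^'m. M *v x)"
  by (rule linearI) (simp_all add: matrix_vector_mult_add_rdistrib scaleR_matrix_vector_assoc)

lemma bilin_mv: "bilinear (\<lambda>(x::real^'n) (M::real^'n^'m). M *v x)"
  unfolding bilinear_def using lin_mv1 matrix_vector_mul_linear by blast

lemma lin_mm1: "linear (\<lambda>M::real^'n^'m. M ** (P::real^'k^'n))"
proof (rule linearI)
  show "(b1 + b2) ** P = b1 ** P + b2 ** P" for b1 b2 :: "real^'n^'m"
    by (vector matrix_matrix_mult_def sum.distrib[symmetric] field_simps)
qed (simp add: scalar_matrix_assoc)

lemma lin_mm2: "linear (\<lambda>P::real^'k^'n. (M::real^'n^'m) ** P)"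
  by (rule linearI) (simp_all add: matrix_add_ldistrib matrix_scalar_ac scalar_matrix_assoc)

lemma bilin_mm: "bilinear (\<lambda>(P::real^'k^'n) (M::real^'n^'m). M ** P)"
  unfolding bilinear_def using lin_mm1 lin_mm2 by blast

lemma transpose_inner: "(transpose A *v x) \<bullet> y = x \<bullet> ((A::real^'n^'m) *v y)"
  apply (simp add: inner_vec_def matrix_vector_mult_def transpose_def sum_distrib_left sum_distrib_right)
  apply (subst sum.swap)
  apply (simp add: mult_ac)
  done

lemma prod_mm_absint:
  fixes A :: "real \<Rightarrow> real^'n^'m" and P :: "real \<Rightarrow> real^'k^'n"
  assumes "continuous_on S P" "compact S" "S \<in> sets lebesgue" "A absolutely_integrable_on S"
  shows "(\<lambda>s. A s ** P s) absolutely_integrable_on S"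
proof -
  have "bounded (P ` S)" using assms by (simp add: compact_continuous_image compact_imp_bounded)
  then show ?thesis
    by (intro absolutely_integrable_bounded_measurable_product[OF bilin_mm
          continuous_imp_measurable_on_sets_lebesgue[OF assms(1) assms(3)] assms(3) _ assms(4)])
qed

lemma prod_mv_absint:
  fixes A :: "real \<Rightarrow> real^'n^'m" and y :: "real \<Rightarrow> real^'n"
  assumes "continuous_on S y" "compact S" "S \<in> sets lebesgue" "A absolutely_integrable_on S"
  shows "(\<lambda>s. A s *v y s) absolutely_integrable_on S"
proof -
  have "bounded (y ` S)" using assms by (simp add: compact_continuous_image compact_imp_bounded)
  then show ?thesis
    by (intro absolutely_integrable_bounded_measurable_product[OF bilin_mv
          continuous_imp_measurable_on_sets_lebesgue[OF assms(1) assms(3)] assms(3) _ assms(4)])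
qed

lemma absint_sub:
  assumes "f absolutely_integrable_on {0..1::real}" "0 \<le> a" "b \<le> 1"
  shows "f absolutely_integrable_on {a..b}"
  using set_integrable_subset[OF assms(1)] assms by auto

lemma absint_hk: "f absolutely_integrable_on S \<Longrightarrow> (f::real\<Rightarrow>'b::euclidean_space) integrable_on S"
  by (rule set_lebesgue_integral_eq_integral(1))

lemma fund_hk:
  fixes A Phi :: "real \<Rightarrow> real^'n^'n"
  assumes "is_fundamental_matrix A Phi" "A absolutely_integrable_on {0..1}"
  shows "continuous_on {0..1} Phi" "(\<lambda>s. A s ** Phi s) absolutely_integrable_on {0..1}"
    "\<And>t. t \<in> {0..1} \<Longrightarrow> Phi t = mat 1 + integral {0..t} (\<lambda>s. A s ** Phi s)"
proof -
  show c: "continuous_on {0..1} Phi" using assms unfolding is_fundamental_matrix_def by blast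
  show i: "(\<lambda>s. A s ** Phi s) absolutely_integrable_on {0..1}"
    by (rule prod_mm_absint[OF c]) (use assms in auto)
  fix t :: real assume t: "t \<in> {0..1}"
  then have "(\<lambda>s. A s ** Phi s) absolutely_integrable_on {0..t}"
    using absint_sub[OF i] by auto
  then have "(LINT s:{0..t}|lebesgue. A s ** Phi s) = integral {0..t} (\<lambda>s. A s ** Phi s)"
    by (rule set_lebesgue_integral_eq_integral(2))
  then show "Phi t = mat 1 + integral {0..t} (\<lambda>s. A s ** Phi s)"
    using assms(1) t unfolding is_fundamental_matrix_def by simp
qed

lemma adj_hk:
  fixes A :: "real \<Rightarrow> real^'n^'n"
  assumes "is_adjoint_solution A g th" "A absolutely_integrable_on {0..1}"
  shows "continuous_on {0..1} th" "(\<lambda>s. transpose (A s) *v th s) absolutely_integrable_on {0..1}"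
    "\<And>t. t \<in> {0..1} \<Longrightarrow> th t = g + integral {t..1} (\<lambda>s. transpose (A s) *v th s)"
proof -
  show c: "continuous_on {0..1} th" using assms unfolding is_adjoint_solution_def by blast
  have "(\<lambda>s. transpose (A s)) absolutely_integrable_on {0..1}"
    apply (intro abs_int_vec)
    apply (simp add: transpose_def)
    apply (intro abs_int_nth assms(2))
    done
  then show i: "(\<lambda>s. transpose (A s) *v th s) absolutely_integrable_on {0..1}"
    by (rule prod_mv_absint[OF c, rotated 2]) auto
  fix t :: real assume t: "t \<in> {0..1}"
  then have "(\<lambda>s. transpose (A s) *v th s) absolutely_integrable_on {t..1}"
    using absint_sub[OF i] by auto
  then have "(LINT s:{t..1}|lebesgue. transpose (A s) *v th s) = integral {t..1} (\<lambda>s. transpose (A s) *v th s)"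
    by (rule set_lebesgue_integral_eq_integral(2))
  then show "th t = g + integral {t..1} (\<lambda>s. transpose (A s) *v th s)"
    using assms(1) t unfolding is_adjoint_solution_def by simp
qed

lemma integral_point: "integral {a..a::real} f = 0"
  using integral_refl[of a f] by (simp add: cbox_interval)

lemma unif_small:
  fixes a :: "real \<Rightarrow> real"
  assumes "a integrable_on {0..1}" "e > 0"
  obtains d where "d > 0" "\<And>t1 t2. 0 \<le> t1 \<Longrightarrow> t1 \<le> t2 \<Longrightarrow> t2 \<le> 1 \<Longrightarrow> t2 - t1 < d \<Longrightarrow>
     \<bar>integral {t1..t2} a\<bar> < e"
proof -
  have "continuous_on {0..1} (\<lambda>x. integral {0..x} a)"
    by (rule indefinite_integral_continuous_1[OF assms(1)])
  then have "uniformly_continuous_on {0..1} (\<lambda>x. integral {0..x} a)"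
    by (rule compact_uniformly_continuous) simp
  then obtain d where d: "d > 0" and dd: "\<And>x x'. x \<in> {0..1} \<Longrightarrow> x' \<in> {0..1} \<Longrightarrow> dist x' x < d \<Longrightarrow>
      dist (integral {0..x'} a) (integral {0..x} a) < e"
    using assms(2) unfolding uniformly_continuous_on_def by metis
  show ?thesis
  proof (rule that[OF d])
    fix t1 t2 :: real assume t: "0 \<le> t1" "t1 \<le> t2" "t2 \<le> 1" "t2 - t1 < d"
    have "a integrable_on {0..t2}"
      by (rule integrable_on_subinterval[OF assms(1)]) (use t in auto)
    then have "integral {0..t1} a + integral {t1..t2} a = integral {0..t2} a"
      by (rule Henstock_Kurzweil_Integration.integral_combine[OF t(1) t(2)])
    moreover have "dist (integral {0..t2} a) (integral {0..t1} a) < e"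
      by (rule dd) (use t in \<open>auto simp: dist_real_def\<close>)
    ultimately show "\<bar>integral {t1..t2} a\<bar> < e" by (simp add: dist_real_def)
  qed
qed

lemma ode_unique:
  fixes A :: "real \<Rightarrow> real^'n^'n" and y :: "real \<Rightarrow> real^'n"
  assumes A: "A absolutely_integrable_on {0..1}" and yc: "continuous_on {0..1} y"
    and incr: "\<And>t t'. 0 \<le> t' \<Longrightarrow> t' \<le> t \<Longrightarrow> t \<le> 1 \<Longrightarrow> y t - y t' = integral {t'..t} (\<lambda>s. A s *v y s)"
    and t0: "t0 \<in> {0..1}" "y t0 = 0"
  shows "\<forall>t\<in>{0..1}. y t = 0"
proof -
  define a where "a = (\<lambda>s. (real CARD('n) * real CARD('n)) * norm (A s))"
  have aabs: "a absolutely_integrable_on {0..1}"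
    using absolutely_integrable_scaleR_left[OF absolutely_integrable_norm[OF A], of "real CARD('n) * real CARD('n)"]
    unfolding a_def by (simp add: o_def)
  then have aint: "a integrable_on {0..1}" by (rule absint_hk)
  have anon: "\<And>s. 0 \<le> a s" unfolding a_def by simp
  have Ayabs: "(\<lambda>s. A s *v y s) absolutely_integrable_on {0..1}"
    by (rule prod_mv_absint[OF yc]) (use A in auto)
  obtain d where d: "d > 0" and dd: "\<And>t1 t2. 0 \<le> t1 \<Longrightarrow> t1 \<le> t2 \<Longrightarrow> t2 \<le> 1 \<Longrightarrow> t2 - t1 < d \<Longrightarrow>
     \<bar>integral {t1..t2} a\<bar> < 1/2"
    using unif_small[OF aint, of "1/2"] by auto
  have step: "\<forall>t\<in>{t1..t2}. y t = 0"
    if t: "0 \<le> t1" "t1 \<le> t2" "t2 \<le> 1" "t2 - t1 < d" and z: "y t1 = 0 \<or> y t2 = 0" for t1 t2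
  proof -
    have "continuous_on {t1..t2} (\<lambda>t. norm (y t))"
      by (intro continuous_on_norm continuous_on_subset[OF yc]) (use t in auto)
    then obtain tm where tm: "tm \<in> {t1..t2}" and mx: "\<And>t. t \<in> {t1..t2} \<Longrightarrow> norm (y t) \<le> norm (y tm)"
      using continuous_attains_sup[of "{t1..t2}" "\<lambda>t. norm (y t)"] t by auto
    define m where "m = norm (y tm)"
    have m0: "0 \<le> m" unfolding m_def by simp
    have "integral {t1..t2} a \<le> 1/2" using dd[OF t] by simp
    have bnd: "norm (y v - y u) \<le> m * (1/2)" if uv: "t1 \<le> u" "u \<le> v" "v \<le> t2" for u v
    proof -
      have i1: "(\<lambda>s. A s *v y s) integrable_on {u..v}"
        by (rule absint_hk, rule absint_sub[OF Ayabs]) (use t uv in auto)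
      have i2: "a integrable_on {u..v}"
        by (rule integrable_on_subinterval[OF aint]) (use t uv in auto)
      have i3: "a integrable_on {t1..t2}"
        by (rule integrable_on_subinterval[OF aint]) (use t uv in auto)
      have "norm (y v - y u) = norm (integral {u..v} (\<lambda>s. A s *v y s))"
        using incr[of u v] t uv by simp
      also have "\<dots> \<le> integral {u..v} (\<lambda>s. m * a s)"
      proof (rule integral_norm_bound_integral[OF i1 integrable_on_mult_right[OF i2]])
        fix s assume s: "s \<in> {u..v}"
        have "norm (A s *v y s) \<le> (real CARD('n) * real CARD('n) * norm (A s)) * norm (y s)"
          by (rule mv_bound2)
        also have "\<dots> \<le> a s * m"
          unfolding a_def m_def by (rule mult_left_mono[OF mx]) (use s uv in auto)
        finally show "norm (A s *v y s) \<le> m * a s" by (simp add: mult.commute)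
      qed
      also have "\<dots> = m * integral {u..v} a" by (rule integral_mult_right)
      also have "\<dots> \<le> m * integral {t1..t2} a"
        by (intro mult_left_mono[OF _ m0] integral_subset_le i2 i3) (use uv anon in auto)
      also have "\<dots> \<le> m * (1/2)"
        by (intro mult_left_mono[OF _ m0]) (use dd[OF t] in simp)
      finally show ?thesis .
    qed
    have "m \<le> m * (1/2)"
    proof (cases "y t1 = 0")
      case True
      then show ?thesis using bnd[of t1 tm] tm unfolding m_def by auto
    next
      case False
      then have "y t2 = 0" using z by simp
      then show ?thesis using bnd[of tm t2] tm unfolding m_def by auto
    qed
    then have "m = 0" using m0 by simp
    then show ?thesis using mx unfolding m_def by (metis norm_le_zero_iff)
  qed
  have ind: "\<forall>t\<in>{0..1}. \<bar>t - t0\<bar> \<le> real j * (d/2) \<longrightarrow> y t = 0" for j :: nat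
  proof (induction j)
    case 0
    then show ?case using t0 by auto
  next
    case (Suc j)
    show ?case
    proof (intro ballI impI)
      fix t assume t: "t \<in> {0..1}" and tj: "\<bar>t - t0\<bar> \<le> real (Suc j) * (d/2)"
      show "y t = 0"
      proof (cases "t0 \<le> t")
        case True
        define c where "c = max t0 (t - d/2)"
        have c: "c \<in> {0..1}" "\<bar>c - t0\<bar> \<le> real j * (d/2)"
          using t t0 True tj d mult_nonneg_nonneg[of "real j" "d/2"] unfolding c_def by (auto simp: algebra_simps max_def)
        then have "y c = 0" using Suc.IH by blast
        then show ?thesis using step[of c t] c t d True unfolding c_def by auto
      next
        case False
        define c where "c = min t0 (t + d/2)"
        have c: "c \<in> {0..1}" "\<bar>c - t0\<bar> \<le> real j * (d/2)"
          using t t0 False tj d mult_nonneg_nonneg[of "real j" "d/2"] unfolding c_def by (auto simp: algebra_simps min_def)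
        then have "y c = 0" using Suc.IH by blast
        then show ?thesis using step[of t c] c t d False unfolding c_def by auto
      qed
    qed
  qed
  obtain j :: nat where j: "2 / d \<le> real j" using real_arch_simple by blast
  then have "1 \<le> real j * (d/2)" using d by (simp add: field_simps)
  show ?thesis
  proof
    fix t :: real assume t: "t \<in> {0..1}"
    then have "\<bar>t - t0\<bar> \<le> 1" using t0 by (auto simp: abs_if)
    then have "\<bar>t - t0\<bar> \<le> real j * (d/2)" using \<open>1 \<le> real j * (d/2)\<close> by linarith
    then show "y t = 0" using ind[of j] t by blast
  qed
qed

lemma bl_mv1: "bounded_linear (\<lambda>M::real^'n^'m. M *v x)"
  using lin_mv1 linear_conv_bounded_linear by blast

lemma fund_incr:
  fixes A Phi :: "real \<Rightarrow> real^'n^'n"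
  assumes F: "is_fundamental_matrix A Phi" and A: "A absolutely_integrable_on {0..1}"
    and t: "0 \<le> t'" "t' \<le> t" "t \<le> 1"
  shows "Phi t *v x - Phi t' *v x = integral {t'..t} (\<lambda>s. A s *v (Phi s *v x))"
proof -
  note fh = fund_hk[OF F A]
  have i0: "(\<lambda>s. A s ** Phi s) integrable_on {0..t}"
    by (rule absint_hk, rule absint_sub[OF fh(2)]) (use t in auto)
  have i1: "(\<lambda>s. A s ** Phi s) integrable_on {t'..t}"
    by (rule absint_hk, rule absint_sub[OF fh(2)]) (use t in auto)
  have "integral {0..t'} (\<lambda>s. A s ** Phi s) + integral {t'..t} (\<lambda>s. A s ** Phi s) = integral {0..t} (\<lambda>s. A s ** Phi s)"
    by (rule Henstock_Kurzweil_Integration.integral_combine[OF t(1) t(2) i0])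
  then have "Phi t - Phi t' = integral {t'..t} (\<lambda>s. A s ** Phi s)"
    using fh(3)[of t] fh(3)[of t'] t by (auto simp: algebra_simps)
  then have "Phi t *v x - Phi t' *v x = integral {t'..t} (\<lambda>s. A s ** Phi s) *v x"
    by (simp add: matrix_vector_mult_diff_rdistrib[symmetric])
  also have "\<dots> = integral {t'..t} ((\<lambda>M. M *v x) \<circ> (\<lambda>s. A s ** Phi s))"
    by (rule integral_linear[OF i1 bl_mv1, symmetric])
  also have "\<dots> = integral {t'..t} (\<lambda>s. A s *v (Phi s *v x))"
    by (simp add: o_def matrix_vector_mul_assoc)
  finally show ?thesis .
qed

lemma fund_cont_vec:
  fixes A Phi :: "real \<Rightarrow> real^'n^'n"
  assumes F: "is_fundamental_matrix A Phi"
  shows "continuous_on {0..1} (\<lambda>s. Phi s *v x)"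
  using bounded_linear.continuous_on[OF bl_mv1] F unfolding is_fundamental_matrix_def by blast

lemma fund_zero:
  fixes A Phi :: "real \<Rightarrow> real^'n^'n"
  assumes F: "is_fundamental_matrix A Phi"
  shows "Phi 0 = mat 1"
proof -
  have "{0::real} \<in> null_sets lebesgue"
    using negligible_sing[of "0::real"] by (simp add: negligible_iff_null_sets)
  then have "AE x in lebesgue. indicat_real {0} x *\<^sub>R (A x ** Phi x) = 0"
    by (rule AE_mp[OF AE_not_in]) simp
  then have "(LINT x|lebesgue. indicat_real {0} x *\<^sub>R (A x ** Phi x)) = 0"
    by (rule integral_eq_zero_AE)
  then show ?thesis using F unfolding is_fundamental_matrix_def
    by (simp add: set_lebesgue_integral_def)
qed

lemma fund_invertible:
  fixes A Phi :: "real \<Rightarrow> real^'n^'n"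
  assumes F: "is_fundamental_matrix A Phi" and A: "A absolutely_integrable_on {0..1}"
    and t: "t \<in> {0..1}"
  shows "invertible (Phi t)"
proof -
  have "\<forall>x. Phi t *v x = 0 \<longrightarrow> x = 0"
  proof (intro allI impI)
    fix x assume x: "Phi t *v x = 0"
    have "\<forall>s\<in>{0..1}. Phi s *v x = 0"
      by (rule ode_unique[OF A fund_cont_vec[OF F] fund_incr[OF F A] t x])
    then have "Phi 0 *v x = 0" by auto
    then show "x = 0" using fund_zero[OF F] by simp
  qed
  then obtain B where "B ** Phi t = mat 1" using matrix_left_invertible_ker by blast
  then have "Phi t ** B = mat 1" "B ** Phi t = mat 1" using matrix_left_right_inverse by auto
  then show ?thesis unfolding invertible_def by blast
qed

lemma eps_zero:
  fixes x K :: real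
  assumes "\<And>e. e > 0 \<Longrightarrow> \<bar>x\<bar> \<le> e * K"
  shows "x = 0"
proof (rule ccontr)
  assume x: "x \<noteq> 0"
  define e where "e = \<bar>x\<bar> / (2 * (\<bar>K\<bar> + 1))"
  have e: "e > 0" using x unfolding e_def by (simp add: add_pos_nonneg)
  have "e * K \<le> e * (\<bar>K\<bar> + 1)" using e by (intro mult_left_mono) auto
  also have "\<dots> = \<bar>x\<bar> / 2" unfolding e_def by (simp add: field_simps)
  finally show False using assms[OF e] x by linarith
qed

lemma inner_const:
  fixes A :: "real \<Rightarrow> real^'n^'n" and th y :: "real \<Rightarrow> real^'n"
  assumes A: "A absolutely_integrable_on {0..1}"
    and thc: "continuous_on {0..1} th" and yc: "continuous_on {0..1} y"
    and aabs: "(\<lambda>s. transpose (A s) *v th s) absolutely_integrable_on {0..1}"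
    and thinc: "\<And>t t'. 0 \<le> t \<Longrightarrow> t \<le> t' \<Longrightarrow> t' \<le> 1 \<Longrightarrow>
       th t - th t' = integral {t..t'} (\<lambda>s. transpose (A s) *v th s)"
    and yinc: "\<And>t t'. 0 \<le> t' \<Longrightarrow> t' \<le> t \<Longrightarrow> t \<le> 1 \<Longrightarrow> y t - y t' = integral {t'..t} (\<lambda>s. A s *v y s)"
    and t: "t \<in> {0..1}"
  shows "th t \<bullet> y t = th 1 \<bullet> y 1"
proof -
  define a where "a = (\<lambda>s. transpose (A s) *v th s)"
  define b where "b = (\<lambda>s. A s *v y s)"
  define c where "c = (\<lambda>s. norm (a s) + norm (b s))"
  define D where "D = (\<lambda>s. th s \<bullet> y s)"
  have babs: "b absolutely_integrable_on {0..1}"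
    unfolding b_def by (rule prod_mv_absint[OF yc]) (use A in auto)
  have cabs: "c absolutely_integrable_on {0..1}"
    unfolding c_def using set_integral_add(1)[OF absolutely_integrable_norm[OF aabs[folded a_def]]
      absolutely_integrable_norm[OF babs]] by (simp add: o_def)
  have ai: "a integrable_on {u..v}" if "0 \<le> u" "v \<le> 1" for u v
    by (rule absint_hk, rule absint_sub[OF aabs[folded a_def]]) (use that in auto)
  have bi: "b integrable_on {u..v}" if "0 \<le> u" "v \<le> 1" for u v
    by (rule absint_hk, rule absint_sub[OF babs]) (use that in auto)
  have ci: "c integrable_on {u..v}" if "0 \<le> u" "v \<le> 1" for u v
    by (rule absint_hk, rule absint_sub[OF cabs]) (use that in auto)
  define C where "C = (\<lambda>x. integral {0..x} c)"
  have Cdiff: "integral {u..v} c = C v - C u" if "0 \<le> u" "u \<le> v" "v \<le> 1" for u v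
    using Henstock_Kurzweil_Integration.integral_combine[OF that(1) that(2) ci[of 0 v]] that
    unfolding C_def by auto
  have ayb: "a s \<bullet> y s = th s \<bullet> b s" for s
    unfolding a_def b_def by (rule transpose_inner)
  have local: "\<exists>d>0. \<forall>u v. 0 \<le> u \<longrightarrow> u \<le> v \<longrightarrow> v \<le> 1 \<longrightarrow> v - u < d \<longrightarrow>
      \<bar>D v - D u\<bar> \<le> e * (C v - C u)" if e: "e > 0" for e
  proof -
    have "uniformly_continuous_on {0..1} th" by (rule compact_uniformly_continuous[OF thc]) simp
    then obtain d1 where d1: "d1 > 0" and dd1: "\<And>x x'. x \<in> {0..1} \<Longrightarrow> x' \<in> {0..1} \<Longrightarrow> dist x' x < d1 \<Longrightarrow>
      dist (th x') (th x) < e"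
      using e unfolding uniformly_continuous_on_def by metis
    have "uniformly_continuous_on {0..1} y" by (rule compact_uniformly_continuous[OF yc]) simp
    then obtain d2 where d2: "d2 > 0" and dd2: "\<And>x x'. x \<in> {0..1} \<Longrightarrow> x' \<in> {0..1} \<Longrightarrow> dist x' x < d2 \<Longrightarrow>
      dist (y x') (y x) < e"
      using e unfolding uniformly_continuous_on_def by metis
    show ?thesis
    proof (intro exI[of _ "min d1 d2"] conjI allI impI)
      show "min d1 d2 > 0" using d1 d2 by simp
      fix u v :: real assume uv: "0 \<le> u" "u \<le> v" "v \<le> 1" "v - u < min d1 d2"
      have thd: "th u - th v = integral {u..v} a" unfolding a_def by (rule thinc) (use uv in auto)
      have yd: "y v - y u = integral {u..v} b" unfolding b_def by (rule yinc) (use uv in auto)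
      have "D v - D u = th v \<bullet> (y v - y u) - (th u - th v) \<bullet> y u"
        unfolding D_def by (simp add: inner_diff_left inner_diff_right)
      also have "\<dots> = th v \<bullet> integral {u..v} b - integral {u..v} a \<bullet> y u"
        by (simp add: thd yd)
      also have "th v \<bullet> integral {u..v} b = integral {u..v} (\<lambda>s. th v \<bullet> b s)"
        using integral_linear[OF bi[of u v] bounded_linear_inner_right[of "th v"]] uv
        by (simp add: o_def)
      also have "integral {u..v} a \<bullet> y u = integral {u..v} (\<lambda>s. a s \<bullet> y u)"
        using integral_linear[OF ai[of u v] bounded_linear_inner_left[of "y u"]] uv
        by (simp add: o_def)
      also have "integral {u..v} (\<lambda>s. th v \<bullet> b s) - integral {u..v} (\<lambda>s. a s \<bullet> y u)
          = integral {u..v} (\<lambda>s. th v \<bullet> b s - a s \<bullet> y u)"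
        by (rule integral_diff[symmetric])
          (use uv in \<open>auto intro!: integrable_linear[OF bi bounded_linear_inner_right, unfolded o_def]
             integrable_linear[OF ai bounded_linear_inner_left, unfolded o_def]\<close>)
      finally have Deq: "D v - D u = integral {u..v} (\<lambda>s. th v \<bullet> b s - a s \<bullet> y u)" .
      have "norm (integral {u..v} (\<lambda>s. th v \<bullet> b s - a s \<bullet> y u)) \<le> integral {u..v} (\<lambda>s. e * c s)"
      proof (rule integral_norm_bound_integral)
        show "(\<lambda>s. th v \<bullet> b s - a s \<bullet> y u) integrable_on {u..v}"
          using uv by (auto intro!: integrable_diff integrable_linear[OF bi bounded_linear_inner_right, unfolded o_def]
             integrable_linear[OF ai bounded_linear_inner_left, unfolded o_def])
        show "(\<lambda>s. e * c s) integrable_on {u..v}"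
          by (rule integrable_on_mult_right[OF ci]) (use uv in auto)
        fix s assume s: "s \<in> {u..v}"
        have "th v \<bullet> b s - a s \<bullet> y u = (th v - th s) \<bullet> b s - a s \<bullet> (y u - y s)"
          using ayb[of s] by (simp add: inner_diff_left inner_diff_right)
        also have "norm \<dots> \<le> norm (th v - th s) * norm (b s) + norm (a s) * norm (y u - y s)"
          using norm_triangle_ineq4[of "(th v - th s) \<bullet> b s" "a s \<bullet> (y u - y s)"]
            Cauchy_Schwarz_ineq2[of "th v - th s" "b s"] Cauchy_Schwarz_ineq2[of "a s" "y u - y s"]
          unfolding real_norm_def by linarith
        also have "\<dots> \<le> e * norm (b s) + norm (a s) * e"
        proof (intro add_mono mult_right_mono mult_left_mono)
          show "norm (th v - th s) \<le> e"
          proof -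
            have "dist v s < d1" using s uv by (simp add: dist_real_def)
            then show ?thesis using dd1[of s v] s uv by (simp add: dist_norm)
          qed
          show "norm (y u - y s) \<le> e"
          proof -
            have "dist u s < d2" using s uv by (simp add: dist_real_def)
            then show ?thesis using dd2[of s u] s uv by (simp add: dist_norm)
          qed
        qed auto
        also have "\<dots> = e * c s" unfolding c_def by (simp add: algebra_simps)
        finally show "norm (th v \<bullet> b s - a s \<bullet> y u) \<le> e * c s" .
      qed
      also have "\<dots> = e * (C v - C u)" using Cdiff[OF uv(1-3)] by (simp add: integral_mult_right)
      finally show "\<bar>D v - D u\<bar> \<le> e * (C v - C u)" using Deq by simp
    qed
  qed
  have "D 1 - D t = 0"
  proof (rule eps_zero[of _ "C 1 - C t"])
    fix e :: real assume e: "e > 0"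
    obtain d where d: "d > 0" and dd: "\<And>u v. 0 \<le> u \<Longrightarrow> u \<le> v \<Longrightarrow> v \<le> 1 \<Longrightarrow> v - u < d \<Longrightarrow>
      \<bar>D v - D u\<bar> \<le> e * (C v - C u)" using local[OF e] by blast
    obtain n :: nat where n: "1 / d < real n" using reals_Archimedean2 by blast
    have npos: "real n > 0" using n d by (smt (verit) divide_pos_pos)
    define tau where "tau = (\<lambda>i::nat. t + real i * (1 - t) / real n)"
    have tau0: "tau 0 = t" and taun: "tau n = 1" unfolding tau_def using npos by auto
    have taumono: "tau i \<le> tau (Suc i)" for i unfolding tau_def using t npos
      by (auto intro!: divide_nonneg_pos simp: field_simps)
    have tauin: "0 \<le> tau i" "tau i \<le> 1" if "i \<le> n" for i
    proof -
      have "0 \<le> real i * (1 - t) / real n" using t npos by auto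
      then show "0 \<le> tau i" unfolding tau_def using t by auto
      have "real i * (1 - t) / real n \<le> real n * (1 - t) / real n"
        using that t npos by (intro divide_right_mono mult_right_mono) auto
      then show "tau i \<le> 1" unfolding tau_def using npos by auto
    qed
    have taustep: "tau (Suc i) - tau i < d" for i
    proof -
      have "tau (Suc i) - tau i = (1 - t) / real n" unfolding tau_def by (simp add: diff_divide_distrib[symmetric] algebra_simps)
      also have "\<dots> \<le> 1 / real n" using t npos by (intro divide_right_mono) auto
      also have "\<dots> < d" using n d npos by (simp add: field_simps)
      finally show ?thesis .
    qed
    have "\<bar>D 1 - D t\<bar> = \<bar>\<Sum>i<n. D (tau (Suc i)) - D (tau i)\<bar>"
      using sum_lessThan_telescope[of "\<lambda>i. D (tau i)" n] by (simp add: tau0 taun)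
    also have "\<dots> \<le> (\<Sum>i<n. \<bar>D (tau (Suc i)) - D (tau i)\<bar>)" by (rule sum_abs)
    also have "\<dots> \<le> (\<Sum>i<n. e * (C (tau (Suc i)) - C (tau i)))"
      by (intro sum_mono dd taumono taustep tauin) auto
    also have "\<dots> = e * (C 1 - C t)"
      using sum_lessThan_telescope[of "\<lambda>i. C (tau i)" n] by (simp add: sum_distrib_left[symmetric] tau0 taun)
    finally show "\<bar>D 1 - D t\<bar> \<le> e * (C 1 - C t)" .
  qed
  then show ?thesis unfolding D_def by simp
qed

lemma minv_right:
  fixes M :: "real^'n^'n"
  assumes "invertible M"
  shows "M ** matrix_inv M = mat 1" "matrix_inv M ** M = mat 1"
proof -
  have "\<exists>M'. M ** M' = mat 1 \<and> M' ** M = mat 1" using assms unfolding invertible_def by blast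
  then have "M ** matrix_inv M = mat 1 \<and> matrix_inv M ** M = mat 1"
    unfolding matrix_inv_def by (rule someI_ex)
  then show "M ** matrix_inv M = mat 1" "matrix_inv M ** M = mat 1" by auto
qed

lemma adj_fund:
  fixes A Phi :: "real \<Rightarrow> real^'n^'n"
  assumes F: "is_fundamental_matrix A Phi" and A: "A absolutely_integrable_on {0..1}"
    and T: "is_adjoint_solution A g th" and t: "t \<in> {0..1}"
  shows "th t \<bullet> (Phi t *v x) = g \<bullet> (Phi 1 *v x)"
proof -
  note ah = adj_hk[OF T A]
  have thinc: "th u - th v = integral {u..v} (\<lambda>s. transpose (A s) *v th s)"
    if uv: "0 \<le> u" "u \<le> v" "v \<le> 1" for u v
  proof -
    have i: "(\<lambda>s. transpose (A s) *v th s) integrable_on {u..1}"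
      by (rule absint_hk, rule absint_sub[OF ah(2)]) (use uv in auto)
    have "integral {u..v} (\<lambda>s. transpose (A s) *v th s) + integral {v..1} (\<lambda>s. transpose (A s) *v th s)
       = integral {u..1} (\<lambda>s. transpose (A s) *v th s)"
      by (rule Henstock_Kurzweil_Integration.integral_combine[OF uv(2) uv(3) i])
    then show ?thesis using ah(3)[of u] ah(3)[of v] uv by (auto simp: algebra_simps)
  qed
  have th1: "th 1 = g" using ah(3)[of 1] by (simp add: integral_point)
  have "th t \<bullet> (Phi t *v x) = th 1 \<bullet> (Phi 1 *v x)"
    by (rule inner_const[OF A ah(1) fund_cont_vec[OF F] ah(2) thinc fund_incr[OF F A] t])
  then show ?thesis using th1 by simp
qed

lemma adj_fund_inv:
  fixes A Phi :: "real \<Rightarrow> real^'n^'n"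
  assumes F: "is_fundamental_matrix A Phi" and A: "A absolutely_integrable_on {0..1}"
    and T: "is_adjoint_solution A g th" and t: "t \<in> {0..1}"
  shows "th t \<bullet> w = g \<bullet> (Phi 1 *v (matrix_inv (Phi t) *v w))"
proof -
  have "Phi t *v (matrix_inv (Phi t) *v w) = w"
    using minv_right(1)[OF fund_invertible[OF F A t]] by (simp add: matrix_vector_mul_assoc)
  then show ?thesis using adj_fund[OF F A T t, of "matrix_inv (Phi t) *v w"] by simp
qed

lemma det_cont: "continuous_on S P \<Longrightarrow> continuous_on S (\<lambda>s. det ((P s)::real^'n^'n))"
  unfolding det_def by (intro continuous_intros)

lemma minv_entry:
  fixes M :: "real^'n^'n"
  assumes "invertible M"
  shows "matrix_inv M $ k $ j = det (\<chi> i l. if l = k then axis j 1 $ i else M $ i $ l) / det M"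
proof -
  have d: "det M \<noteq> 0" using assms by (simp add: invertible_det_nz[symmetric])
  have "M *v (matrix_inv M *v axis j 1) = axis j 1"
    using minv_right(1)[OF assms] by (simp add: matrix_vector_mul_assoc)
  then have "matrix_inv M *v axis j 1 = (\<chi> k. det (\<chi> i l. if l = k then axis j 1 $ i else M $ i $ l) / det M)"
    using cramer[OF d] by blast
  moreover have "(matrix_inv M *v axis j 1) $ k = matrix_inv M $ k $ j"
    by (simp add: matrix_vector_mult_def axis_def if_distrib cong: if_cong)
  ultimately show ?thesis by simp
qed

lemma minv_cont:
  fixes P :: "real \<Rightarrow> real^'n^'n"
  assumes c: "continuous_on S P" and inv: "\<And>s. s \<in> S \<Longrightarrow> invertible (P s)"
  shows "continuous_on S (\<lambda>s. matrix_inv (P s))"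
proof -
  have eq: "matrix_inv (P s) = (\<chi> k j. det (\<chi> i l. if l = k then axis j 1 $ i else P s $ i $ l) / det (P s))"
    if "s \<in> S" for s
    using minv_entry[OF inv[OF that]] by (simp add: vec_eq_iff)
  have h1: "continuous_on S (\<lambda>s. \<chi> i l. if l = k then axis j 1 $ i else P s $ i $ l)" for k j
      apply (intro continuous_on_vec_lambda)
      subgoal for i l by (cases "l = k") (auto intro!: continuous_intros c)
      done
  have nz: "\<forall>s\<in>S. det (P s) \<noteq> 0" using inv by (simp add: invertible_det_nz[symmetric])
  have "continuous_on S (\<lambda>s. (\<chi> k j. det (\<chi> i l. if l = k then axis j 1 $ i else P s $ i $ l) / det (P s)))"
    by (intro continuous_on_vec_lambda continuous_on_divide[OF det_cont[OF h1] det_cont[OF c] nz])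
  then show ?thesis by (rule continuous_on_eq) (simp add: eq)
qed

lemma sbm_of_si: "set_integrable M S f \<Longrightarrow> set_borel_measurable M S f"
  unfolding set_integrable_def set_borel_measurable_def by (rule borel_measurable_integrable)

lemma sbm_nth:
  fixes u :: "real \<Rightarrow> real^'m"
  assumes "set_borel_measurable M S u"
  shows "set_borel_measurable M S (\<lambda>s. u s $ j)"
proof -
  have "(\<lambda>x. (indicator S x *\<^sub>R u x) $ j) \<in> borel_measurable M"
    using measurable_compose[OF assms[unfolded set_borel_measurable_def] borel_measurable_nth] by simp
  then show ?thesis unfolding set_borel_measurable_def by simp
qed

lemma L2prod:
  fixes f g :: "real \<Rightarrow> real"
  assumes "set_borel_measurable lebesgue S f" "set_borel_measurable lebesgue S g"
    "set_integrable lebesgue S (\<lambda>x. (f x)\<^sup>2)" "set_integrable lebesgue S (\<lambda>x. (g x)\<^sup>2)"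
  shows "set_integrable lebesgue S (\<lambda>x. f x * g x)"
proof (rule set_integrable_bound[OF set_integral_add(1)[OF assms(3) assms(4)]])
  have "(\<lambda>x. (indicator S x *\<^sub>R f x) * (indicator S x *\<^sub>R g x)) \<in> borel_measurable lebesgue"
    using assms(1,2) unfolding set_borel_measurable_def by measurable
  moreover have "(\<lambda>x. (indicator S x *\<^sub>R f x) * (indicator S x *\<^sub>R g x)) = (\<lambda>x. indicator S x *\<^sub>R (f x * g x))"
    by (auto simp: indicator_def)
  ultimately show "set_borel_measurable lebesgue S (\<lambda>x. f x * g x)"
    unfolding set_borel_measurable_def by simp
  show "AE x\<in>S in lebesgue. norm (f x * g x) \<le> norm ((f x)\<^sup>2 + (g x)\<^sup>2)"
  proof (intro AE_I2 impI)
    fix x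
    have "0 \<le> (\<bar>f x\<bar> - \<bar>g x\<bar>)\<^sup>2" by simp
    then have "2 * (\<bar>f x\<bar> * \<bar>g x\<bar>) \<le> (f x)\<^sup>2 + (g x)\<^sup>2" by (simp add: power2_eq_square algebra_simps)
    moreover have "0 \<le> \<bar>f x\<bar> * \<bar>g x\<bar>" by simp
    ultimately have "\<bar>f x\<bar> * \<bar>g x\<bar> \<le> (f x)\<^sup>2 + (g x)\<^sup>2" by linarith
    then show "norm (f x * g x) \<le> norm ((f x)\<^sup>2 + (g x)\<^sup>2)" by (simp add: abs_mult)
  qed
qed

lemma Bu_absint:
  fixes B :: "real \<Rightarrow> real^'m^'n" and u :: "real \<Rightarrow> real^'m"
  assumes B: "\<And>i j. set_integrable lebesgue S (\<lambda>s. B s $ i $ j)"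
    and B2: "\<And>i j. set_integrable lebesgue S (\<lambda>s. (B s $ i $ j)\<^sup>2)"
    and um: "set_borel_measurable lebesgue S u"
    and u2: "set_integrable lebesgue S (\<lambda>t. (norm (u t))\<^sup>2)"
  shows "(\<lambda>s. B s *v u s) absolutely_integrable_on S"
proof (rule abs_int_vec)
  fix i
  have uj2: "set_integrable lebesgue S (\<lambda>s. (u s $ j)\<^sup>2)" for j
  proof (rule set_integrable_bound[OF u2])
    have "set_borel_measurable lebesgue S (\<lambda>s. u s $ j)" by (rule sbm_nth[OF um])
    then show "set_borel_measurable lebesgue S (\<lambda>s. (u s $ j)\<^sup>2)"
      unfolding set_borel_measurable_def
    proof -
      assume "(\<lambda>x. indicat_real S x *\<^sub>R u x $ j) \<in> borel_measurable lebesgue"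
      then have "(\<lambda>x. (indicat_real S x *\<^sub>R u x $ j)\<^sup>2) \<in> borel_measurable lebesgue" by measurable
      moreover have "(\<lambda>x. (indicat_real S x *\<^sub>R u x $ j)\<^sup>2) = (\<lambda>x. indicat_real S x *\<^sub>R (u x $ j)\<^sup>2)"
        by (auto simp: indicator_def)
      ultimately show "(\<lambda>x. indicat_real S x *\<^sub>R (u x $ j)\<^sup>2) \<in> borel_measurable lebesgue" by simp
    qed
    show "AE x\<in>S in lebesgue. norm ((u x $ j)\<^sup>2) \<le> norm ((norm (u x))\<^sup>2)"
    proof (intro AE_I2 impI)
      fix x
      have "\<bar>u x $ j\<bar> \<le> norm (u x)" by (rule component_le_norm_cart)
      then have "(u x $ j)\<^sup>2 \<le> (norm (u x))\<^sup>2"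
        by (metis abs_ge_zero power2_abs power_mono)
      then show "norm ((u x $ j)\<^sup>2) \<le> norm ((norm (u x))\<^sup>2)" by simp
    qed
  qed
  have "(\<lambda>s. \<Sum>j\<in>UNIV. B s $ i $ j * u s $ j) absolutely_integrable_on S"
    by (intro absolutely_integrable_sum L2prod sbm_of_si[OF B] sbm_nth[OF um] B2 uj2) auto
  then show "(\<lambda>s. (B s *v u s) $ i) absolutely_integrable_on S"
    by (simp add: matrix_vector_mult_def)
qed

lemma bilin_mv2: "bilinear (\<lambda>(M::real^'n^'m) (x::real^'n). M *v x)"
  unfolding bilinear_def using lin_mv1 matrix_vector_mul_linear by blast

lemma cont_mv_absint:
  fixes M :: "real \<Rightarrow> real^'n^'m" and w :: "real \<Rightarrow> real^'n"
  assumes "continuous_on S M" "compact S" "S \<in> sets lebesgue" "w absolutely_integrable_on S"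
  shows "(\<lambda>s. M s *v w s) absolutely_integrable_on S"
proof -
  have "bounded (M ` S)" using assms by (simp add: compact_continuous_image compact_imp_bounded)
  then show ?thesis
    by (intro absolutely_integrable_bounded_measurable_product[OF bilin_mv2
          continuous_imp_measurable_on_sets_lebesgue[OF assms(1) assms(3)] assms(3) _ assms(4)])
qed

lemma grad_deriv:
  fixes h :: "real^'n \<Rightarrow> real"
  assumes "h differentiable (at z)"
  shows "(h has_derivative (\<lambda>v. gradient h z \<bullet> v)) (at z)"
proof -
  obtain D where D: "(h has_derivative D) (at z)" using assms unfolding differentiable_def by blast
  then have lin: "linear D" using has_derivative_linear by blast
  define g where "g = adjoint D 1"
  have "D x = g \<bullet> x" for x
    using adjoint_works[OF lin, of x 1] unfolding g_def by (simp add: inner_commute)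
  then have "D = (\<lambda>v. g \<bullet> v)" by auto
  with D have Dg: "(h has_derivative (\<lambda>v. g \<bullet> v)) (at z)" by simp
  have "(THE g. (h has_derivative (\<lambda>v. g \<bullet> v)) (at z)) = g"
  proof (rule the_equality)
    show "(h has_derivative (\<lambda>v. g \<bullet> v)) (at z)" by (rule Dg)
    fix g' assume "(h has_derivative (\<lambda>v. g' \<bullet> v)) (at z)"
    then have "(\<lambda>v. g' \<bullet> v) = (\<lambda>v. g \<bullet> v)" using has_derivative_unique Dg by blast
    then have "g' \<bullet> (g' - g) = g \<bullet> (g' - g)" by metis
    then have "(g' - g) \<bullet> (g' - g) = 0" by (simp add: inner_diff_left)
    then show "g' = g" by simp
  qed
  then show ?thesis using Dg unfolding gradient_def by simp
qed

lemma ts_mono_lt: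
  fixes ts :: "nat \<Rightarrow> real"
  assumes "\<And>i. i < N \<Longrightarrow> ts i < ts (Suc i)"
  shows "i < j \<Longrightarrow> j \<le> N \<Longrightarrow> ts i < ts j"
proof (induction j)
  case 0 then show ?case by simp
next
  case (Suc j)
  show ?case
  proof (cases "i = j")
    case True then show ?thesis using assms Suc.prems by simp
  next
    case False
    then have "ts i < ts j" using Suc by simp
    also have "\<dots> < ts (Suc j)" using assms Suc.prems by simp
    finally show ?thesis .
  qed
qed

lemma ts_mono_le:
  fixes ts :: "nat \<Rightarrow> real"
  assumes "\<And>i. i < N \<Longrightarrow> ts i < ts (Suc i)"
  shows "i \<le> j \<Longrightarrow> j \<le> N \<Longrightarrow> ts i \<le> ts j"
  using ts_mono_lt[of N ts, OF assms, of i j] by (cases "i = j") auto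

lemma cover:
  fixes ts :: "nat \<Rightarrow> real"
  assumes mono: "\<And>i. i < N \<Longrightarrow> ts i < ts (Suc i)" and "ts 0 = 0" "ts N = 1"
    and t: "t \<in> {0..1}" "t \<notin> ts ` {0..N}"
  shows "\<exists>k\<in>{1..N}. ts (k - 1) < t \<and> t < ts k"
proof -
  have ex: "\<exists>k. k \<le> N \<and> t < ts k"
  proof -
    have "t \<noteq> 1" using t assms(3) by force
    then show ?thesis using t assms(3) by (intro exI[of _ N]) auto
  qed
  define k where "k = (LEAST k. k \<le> N \<and> t < ts k)"
  have k: "k \<le> N" "t < ts k" using LeastI_ex[OF ex] unfolding k_def by auto
  have k0: "k \<noteq> 0" using k t assms(2) by auto
  have "\<not> (k - 1 \<le> N \<and> t < ts (k - 1))"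
    using not_less_Least[of "k - 1" "\<lambda>k. k \<le> N \<and> t < ts k"] k0 unfolding k_def by auto
  then have "ts (k - 1) \<le> t" using k by auto
  moreover have "ts (k - 1) \<noteq> t" using t k by force
  ultimately show ?thesis using k k0 by (intro bexI[of _ k]) auto
qed

lemma theta_sum:
  fixes ts :: "nat \<Rightarrow> real" and th :: "nat \<Rightarrow> real \<Rightarrow> real^'n"
  assumes mono: "\<And>i. i < N \<Longrightarrow> ts i < ts (Suc i)"
    and k: "k \<in> {1..N}" and t: "ts (k - 1) < t" "t < ts k"
  shows "(\<Sum>k'\<in>{1..N}. indicator {ts (k' - 1)..<ts k'} t *\<^sub>R th k' t) = th k t"
proof -
  have z: "indicator {ts (k' - 1)..<ts k'} t = (0::real)" if k': "k' \<in> {1..N} - {k}" for k'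
  proof (cases "k' < k")
    case True
    then have "ts k' \<le> ts (k - 1)" using ts_mono_le[of N ts, OF mono, of k' "k - 1"] k by auto
    then show ?thesis using t by (auto simp: indicator_def)
  next
    case False
    then have "k < k'" using k' by auto
    then have "ts k \<le> ts (k' - 1)" using ts_mono_le[of N ts, OF mono, of k "k' - 1"] k' by auto
    then show ?thesis using t by (auto simp: indicator_def)
  qed
  have "(\<Sum>k'\<in>{1..N}. indicator {ts (k' - 1)..<ts k'} t *\<^sub>R th k' t)
      = indicator {ts (k - 1)..<ts k} t *\<^sub>R th k t + (\<Sum>k'\<in>{1..N} - {k}. indicator {ts (k' - 1)..<ts k'} t *\<^sub>R th k' t)"
    using k by (subst sum.remove) auto
  also have "(\<Sum>k'\<in>{1..N} - {k}. indicator {ts (k' - 1)..<ts k'} t *\<^sub>R th k' t) = 0"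
  proof (rule sum.neutral, intro ballI)
    fix k' assume "k' \<in> {1..N} - {k}"
    then show "indicator {ts (k' - 1)..<ts k'} t *\<^sub>R th k' t = 0" using z[of k'] by simp
  qed
  finally show ?thesis using t by (simp add: indicator_def)
qed

lemma measure_Icc_leb: "a \<le> b \<Longrightarrow> measure lebesgue {a..b::real} = b - a"
  using lmeasure_integral[of "{a..b}"] by (simp add: integral_const_real)

lemma small_subset:
  fixes S :: "real set"
  assumes S: "S \<in> sets lebesgue" "S \<subseteq> {a..b}" and pos: "0 < measure lebesgue S" and eta: "eta > 0"
  obtains S' where "S' \<in> sets lebesgue" "S' \<subseteq> S" "0 < measure lebesgue S'" "measure lebesgue S' \<le> eta"
proof -
  define m where "m = (\<lambda>r. measure lebesgue (S \<inter> {..r}))"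
  have fin: "T \<in> fmeasurable lebesgue" if "T \<in> sets lebesgue" "T \<subseteq> {a..b}" for T
    by (rule bounded_set_imp_lmeasurable[OF bounded_subset[OF bounded_closed_interval that(2)] that(1)])
  have Sr: "S \<inter> {..r} \<in> sets lebesgue" for r by (intro sets.Int S(1)) simp
  have Srr: "S \<inter> {r<..r'} \<in> sets lebesgue" for r r' by (intro sets.Int S(1)) simp
  have lip: "m r' \<le> m r + (r' - r)" "m r \<le> m r'" if "r \<le> r'" for r r'
  proof -
    have eq: "S \<inter> {..r'} = (S \<inter> {..r}) \<union> (S \<inter> {r<..r'})" using that by auto
    have f1: "S \<inter> {..r} \<in> fmeasurable lebesgue" by (rule fin[OF Sr]) (use S(2) in blast)
    have f2: "S \<inter> {r<..r'} \<in> fmeasurable lebesgue" by (rule fin[OF Srr]) (use S(2) in blast)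
    have f3: "S \<inter> {..r'} \<in> fmeasurable lebesgue" by (rule fin[OF Sr]) (use S(2) in blast)
    have "measure lebesgue ((S \<inter> {..r}) \<union> (S \<inter> {r<..r'})) \<le> measure lebesgue (S \<inter> {..r}) + measure lebesgue (S \<inter> {r<..r'})"
      by (rule measure_subadditive[OF Sr Srr]) (use fmeasurableD2[OF f1] fmeasurableD2[OF f2] in simp_all)
    then have "m r' \<le> m r + measure lebesgue (S \<inter> {r<..r'})" unfolding m_def eq .
    moreover have "measure lebesgue (S \<inter> {r<..r'}) \<le> measure lebesgue {r..r'}"
      by (rule measure_mono_fmeasurable[OF _ Srr]) (auto simp: lmeasurable_cbox[unfolded cbox_interval])
    ultimately show "m r' \<le> m r + (r' - r)" using measure_Icc_leb[OF that] by simp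
    show "m r \<le> m r'" unfolding m_def
      by (rule measure_mono_fmeasurable[OF _ Sr f3]) (use that in auto)
  qed
  have cont: "continuous_on {a - 1..b} m"
    unfolding continuous_on_iff
  proof (intro ballI allI impI)
    fix x e :: real assume "x \<in> {a - 1..b}" "e > 0"
    show "\<exists>d>0. \<forall>x'\<in>{a - 1..b}. dist x' x < d \<longrightarrow> dist (m x') (m x) < e"
    proof (intro exI[of _ e] conjI ballI impI)
      fix x' assume d: "dist x' x < e"
      show "dist (m x') (m x) < e"
      proof (cases "x \<le> x'")
        case True
        then show ?thesis using lip[OF True] d by (simp add: dist_real_def)
      next
        case False
        then have "x' \<le> x" by simp
        then show ?thesis using lip[OF \<open>x' \<le> x\<close>] d by (simp add: dist_real_def)
      qed
    qed fact
  qed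
  have "S \<inter> {..a - 1} = {}" using S(2) by auto
  then have ma: "m (a - 1) = 0" unfolding m_def by simp
  have "S \<inter> {..b} = S" using S(2) by auto
  then have mb: "m b = measure lebesgue S" unfolding m_def by simp
  define y where "y = min eta (measure lebesgue S)"
  have ab: "a - 1 \<le> b"
  proof -
    have "S \<noteq> {}" using pos by auto
    then show ?thesis using S(2) by auto
  qed
  have "m (a - 1) \<le> y" "y \<le> m b" using ma mb pos eta unfolding y_def by auto
  then obtain r where r: "a - 1 \<le> r" "r \<le> b" "m r = y"
    using IVT'[of m "a - 1" y b, OF _ _ ab cont] by auto
  show ?thesis
  proof (rule that[of "S \<inter> {..r}"])
    show "S \<inter> {..r} \<in> sets lebesgue" by (rule Sr)
    show "S \<inter> {..r} \<subseteq> S" by simp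
    have "m r > 0" "m r \<le> eta" using r pos eta unfolding y_def by auto
    then show "0 < measure lebesgue (S \<inter> {..r})" "measure lebesgue (S \<inter> {..r}) \<le> eta"
      unfolding m_def by auto
  qed
qed

lemma adm_perturb:
  assumes adm: "admissible V u" and v: "v \<in> V" and S: "S \<in> sets lebesgue"
  shows "admissible V (\<lambda>t. if t \<in> S then v else u t)"
proof -
  have uV: "\<forall>t\<in>{0..1}. u t \<in> V" and um: "set_borel_measurable lebesgue {0..1} u"
    and u2: "set_integrable lebesgue {0..1::real} (\<lambda>t. (norm (u t))\<^sup>2)"
    using adm unfolding admissible_def by auto
  have I: "{0..1::real} \<in> sets lebesgue" by simp
  have m1: "(\<lambda>t. indicator {0..1::real} t *\<^sub>R v) \<in> borel_measurable lebesgue"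
    by (intro borel_measurable_scaleR borel_measurable_indicator borel_measurable_const) simp
  have m2: "(\<lambda>t. indicator {0..1::real} t *\<^sub>R u t) \<in> borel_measurable lebesgue"
    using um unfolding set_borel_measurable_def .
  have "(\<lambda>t. if t \<in> S then indicator {0..1::real} t *\<^sub>R v else indicator {0..1::real} t *\<^sub>R u t)
      \<in> borel_measurable lebesgue"
    by (rule measurable_If_set[OF m1 m2]) (use S in simp)
  moreover have "(\<lambda>t. if t \<in> S then indicator {0..1::real} t *\<^sub>R v else indicator {0..1::real} t *\<^sub>R u t)
     = (\<lambda>t. indicator {0..1::real} t *\<^sub>R (if t \<in> S then v else u t))" by auto
  ultimately have m: "set_borel_measurable lebesgue {0..1} (\<lambda>t. if t \<in> S then v else u t)"
    unfolding set_borel_measurable_def by simp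
  have c: "set_integrable lebesgue {0..1::real} (\<lambda>t. (norm v)\<^sup>2)"
    by (rule absolutely_integrable_on_const) (simp add: lmeasurable_cbox[unfolded cbox_interval])
  have g: "set_integrable lebesgue {0..1::real} (\<lambda>t. (norm v)\<^sup>2 - (norm (u t))\<^sup>2)"
    by (rule set_integral_diff(1)[OF c u2])
  have "integrable lebesgue (\<lambda>t. indicator S t *\<^sub>R (indicator {0..1::real} t *\<^sub>R ((norm v)\<^sup>2 - (norm (u t))\<^sup>2)))"
    by (rule integrable_mult_indicator[OF S g[unfolded set_integrable_def]])
  then have g2: "set_integrable lebesgue {0..1::real} (\<lambda>t. indicator S t * ((norm v)\<^sup>2 - (norm (u t))\<^sup>2))"
    unfolding set_integrable_def by (simp add: mult_ac)
  have "set_integrable lebesgue {0..1::real} (\<lambda>t. (norm (u t))\<^sup>2 + indicator S t * ((norm v)\<^sup>2 - (norm (u t))\<^sup>2))"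
    by (rule set_integral_add(1)[OF u2 g2])
  moreover have "(\<lambda>t. (norm (u t))\<^sup>2 + indicator S t * ((norm v)\<^sup>2 - (norm (u t))\<^sup>2))
      = (\<lambda>t. (norm (if t \<in> S then v else u t))\<^sup>2)" by (auto simp: indicator_def)
  ultimately have "set_integrable lebesgue {0..1::real} (\<lambda>t. (norm (if t \<in> S then v else u t))\<^sup>2)" by simp
  then show ?thesis unfolding admissible_def using uV v m by auto
qed

lemma zvec_same:
  assumes "\<And>s. s \<in> {ts (i - 1)..<ts i} \<Longrightarrow> u s = u0 s"
  shows "zvec Phi B ts u i = zvec Phi B ts u0 i"
  unfolding zvec_def using assms by (subst set_lebesgue_integral_cong[where g="\<lambda>s. (matrix_inv (Phi s) ** B s) *v u0 s"]) auto

lemma obj_split: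
  assumes k: "k \<in> {1..N}" and same: "\<And>i. i \<in> {1..N} - {k} \<Longrightarrow> zvec Phi B ts u i = zvec Phi B ts u0 i"
  shows "objective M N xi ts Phi B f x0 Q u = hfun M N xi ts Phi B f x0 Q u0 k (zvec Phi B ts u k)"
proof -
  have "x_end N xi ts Phi B f x0 u \<omega> = xhat0 Phi f x0 + (\<Sum>i\<in>{1..N} - {k}. xi i \<omega> *\<^sub>R zvec Phi B ts u0 i)
          + xi k \<omega> *\<^sub>R zvec Phi B ts u k" for \<omega>
  proof -
    have "(\<Sum>i\<in>{1..N}. xi i \<omega> *\<^sub>R zvec Phi B ts u i) = xi k \<omega> *\<^sub>R zvec Phi B ts u k + (\<Sum>i\<in>{1..N} - {k}. xi i \<omega> *\<^sub>R zvec Phi B ts u i)"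
      using k by (subst sum.remove) auto
    also have "(\<Sum>i\<in>{1..N} - {k}. xi i \<omega> *\<^sub>R zvec Phi B ts u i) = (\<Sum>i\<in>{1..N} - {k}. xi i \<omega> *\<^sub>R zvec Phi B ts u0 i)"
      by (rule sum.cong) (simp_all add: same)
    finally show ?thesis unfolding x_end_def by (simp add: algebra_simps)
  qed
  then show ?thesis unfolding objective_def hfun_def by simp
qed

lemma zvec_perturb:
  fixes Phi :: "real \<Rightarrow> real^'n^'n" and B :: "real \<Rightarrow> real^'m^'n" and u0 :: "real \<Rightarrow> real^'m"
  assumes K: "{ts (k - 1)..<ts k} \<subseteq> {0..1}" and S: "S \<in> sets lebesgue" "S \<subseteq> {ts (k - 1)..<ts k}"
    and G0m: "(\<lambda>s. matrix_inv (Phi s) *v (B s *v u0 s)) absolutely_integrable_on {0..1}"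
    and Hm: "(\<lambda>s. matrix_inv (Phi s) *v (B s *v (v - u0 s))) absolutely_integrable_on {0..1}"
  shows "zvec Phi B ts (\<lambda>t. if t \<in> S then v else u0 t) k = zvec Phi B ts u0 k
     + Phi 1 *v (LINT s:S|lebesgue. matrix_inv (Phi s) *v (B s *v (v - u0 s)))"
proof -
  define G where "G = (\<lambda>s. matrix_inv (Phi s) *v (B s *v u0 s))"
  define Hf where "Hf = (\<lambda>s. matrix_inv (Phi s) *v (B s *v (v - u0 s)))"
  define KK where "KK = {ts (k - 1)..<ts k}"
  have KKs: "KK \<in> sets lebesgue" unfolding KK_def by simp
  have eq: "(matrix_inv (Phi s) ** B s) *v (if s \<in> S then v else u0 s) = G s + indicator S s *\<^sub>R Hf s" for s
    unfolding G_def Hf_def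
    by (cases "s \<in> S") (simp_all add: matrix_vector_mul_assoc[symmetric] matrix_vector_right_distrib[symmetric])
  have iG: "set_integrable lebesgue KK G"
    by (rule set_integrable_subset[OF G0m[folded G_def] KKs]) (use K in \<open>simp add: KK_def\<close>)
  have ind: "indicator KK s *\<^sub>R (indicator S s *\<^sub>R Hf s) = indicator S s *\<^sub>R (indicator {0..1} s *\<^sub>R Hf s)" for s
    using S(2) K unfolding KK_def by (auto simp: indicator_def)
  have ind2: "indicator KK s *\<^sub>R (indicator S s *\<^sub>R Hf s) = indicator S s *\<^sub>R Hf s" for s
    using S(2) unfolding KK_def by (auto simp: indicator_def)
  have iH: "set_integrable lebesgue KK (\<lambda>s. indicator S s *\<^sub>R Hf s)"
    unfolding set_integrable_def ind
    by (rule integrable_mult_indicator[OF S(1) Hm[folded Hf_def, unfolded set_integrable_def]])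
  have "(LINT s:KK|lebesgue. (matrix_inv (Phi s) ** B s) *v (if s \<in> S then v else u0 s))
      = (LINT s:KK|lebesgue. G s + indicator S s *\<^sub>R Hf s)" by (simp add: eq)
  also have "\<dots> = (LINT s:KK|lebesgue. G s) + (LINT s:KK|lebesgue. indicator S s *\<^sub>R Hf s)"
    by (rule set_integral_add(2)[OF iG iH])
  also have "(LINT s:KK|lebesgue. indicator S s *\<^sub>R Hf s) = (LINT s:S|lebesgue. Hf s)"
    unfolding set_lebesgue_integral_def ind2 ..
  finally have "(LINT s:KK|lebesgue. (matrix_inv (Phi s) ** B s) *v (if s \<in> S then v else u0 s))
      = (LINT s:KK|lebesgue. (matrix_inv (Phi s) ** B s) *v u0 s) + (LINT s:S|lebesgue. Hf s)"
    unfolding G_def by (simp add: matrix_vector_mul_assoc)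
  then show ?thesis unfolding zvec_def KK_def Hf_def by (simp add: matrix_vector_right_distrib)
qed

lemma key_null:
  fixes M :: "'w measure" and xi :: "nat \<Rightarrow> 'w \<Rightarrow> real" and ts :: "nat \<Rightarrow> real"
    and A :: "real \<Rightarrow> real^'n^'n" and B :: "real \<Rightarrow> real^'m^'n" and f :: "real \<Rightarrow> real^'n"
    and Phi :: "real \<Rightarrow> real^'n^'n" and u0 :: "real \<Rightarrow> real^'m" and th :: "real \<Rightarrow> real^'n"
  assumes fund: "is_fundamental_matrix A Phi" and A: "A absolutely_integrable_on {0..1}"
    and adm0: "admissible V u0"
    and opt: "\<And>u. admissible V u \<Longrightarrow>
           objective M N xi ts Phi B f x0 Q u \<le> objective M N xi ts Phi B f x0 Q u0"
    and reg: "hfun M N xi ts Phi B f x0 Q u0 k differentiable (at (zvec Phi B ts u0 k))"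
    and adj: "is_adjoint_solution A
           (gradient (hfun M N xi ts Phi B f x0 Q u0 k) (zvec Phi B ts u0 k)) th"
    and k: "k \<in> {1..N}" and mono: "\<And>i. i < N \<Longrightarrow> ts i < ts (Suc i)" and ts0: "ts 0 = 0" and tsN: "ts N = 1"
    and Hm: "(\<lambda>s. matrix_inv (Phi s) *v (B s *v (v - u0 s))) absolutely_integrable_on {0..1}"
    and G0m: "(\<lambda>s. matrix_inv (Phi s) *v (B s *v u0 s)) absolutely_integrable_on {0..1}"
    and v: "v \<in> V"
  shows "{s \<in> {ts (k - 1)<..<ts k}. 0 < th s \<bullet> (B s *v (v - u0 s))} \<in> null_sets lebesgue"
proof -
  define h where "h = hfun M N xi ts Phi B f x0 Q u0 k"
  define z0 where "z0 = zvec Phi B ts u0 k"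
  define g where "g = gradient h z0"
  define a where "a = ts (k - 1)"
  define b where "b = ts k"
  have a0: "0 \<le> a" unfolding a_def using ts_mono_le[of N ts, OF mono, of 0 "k - 1"] k ts0 by auto
  have ab: "a < b" unfolding a_def b_def using ts_mono_lt[of N ts, OF mono, of "k - 1" k] k by auto
  have b1: "b \<le> 1" unfolding b_def using ts_mono_le[of N ts, OF mono, of k N] k tsN by auto
  define J where "J = {a<..<b}"
  have J01: "J \<subseteq> {0..1}" unfolding J_def using a0 b1 by auto
  define Hf where "Hf = (\<lambda>s. matrix_inv (Phi s) *v (B s *v (v - u0 s)))"
  define c where "c = transpose (Phi 1) *v g"
  have psi: "th s \<bullet> (B s *v (v - u0 s)) = c \<bullet> Hf s" if "s \<in> {0..1}" for s
    using adj_fund_inv[OF fund A adj[folded h_def z0_def g_def] that, of "B s *v (v - u0 s)"]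
    unfolding c_def Hf_def transpose_inner by simp
  define HI where "HI = (\<lambda>s. indicator {0..1::real} s *\<^sub>R Hf s)"
  have HIm: "HI \<in> borel_measurable lebesgue"
    using sbm_of_si[OF Hm[folded Hf_def]] unfolding HI_def set_borel_measurable_def .
  have HIJ: "HI s = Hf s" if "s \<in> J" for s using J01 that unfolding HI_def by auto
  define E where "E = {s \<in> {ts (k - 1)<..<ts k}. 0 < th s \<bullet> (B s *v (v - u0 s))}"
  have E: "E = J \<inter> {s. 0 < c \<bullet> HI s}"
    unfolding E_def J_def a_def[symmetric] b_def[symmetric] using psi HIJ J01 unfolding J_def by auto
  have predm: "{s. P (HI s)} \<in> sets lebesgue" if "Measurable.pred borel P" for P
  proof -
    have "(\<lambda>s. P (HI s)) \<in> lebesgue \<rightarrow>\<^sub>M count_space UNIV" 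
      using measurable_compose[OF HIm that] by simp
    then have "{s \<in> space lebesgue. P (HI s)} \<in> sets lebesgue" by (simp add: pred_def)
    then show ?thesis by simp
  qed
  have Js: "J \<in> sets lebesgue" unfolding J_def by simp
  have Es: "E \<in> sets lebesgue" unfolding E by (intro sets.Int Js predm) measurable
  define Ej where "Ej = (\<lambda>j::nat. J \<inter> {s. 1 / real (Suc j) \<le> c \<bullet> HI s \<and> norm (HI s) \<le> real j})"
  have Ejs: "Ej j \<in> sets lebesgue" for j unfolding Ej_def by (intro sets.Int Js predm) measurable
  show ?thesis
  proof (rule ccontr)
    assume nn: "\<not> ?thesis"
    have "E \<subseteq> (\<Union>j. Ej j)"
    proof
      fix s assume s: "s \<in> E"
      then have sJ: "s \<in> J" and pos: "0 < c \<bullet> HI s" unfolding E by auto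
      obtain n :: nat where n: "n > 0" "inverse (real n) < c \<bullet> HI s"
        using ex_inverse_of_nat_less[OF pos] by auto
      obtain m :: nat where m: "norm (HI s) \<le> real m" using real_arch_simple by blast
      define j where "j = max n m"
      have "1 / real (Suc j) \<le> inverse (real n)"
        using n unfolding j_def by (simp add: field_simps)
      moreover have "norm (HI s) \<le> real j" using m unfolding j_def by (simp add: le_max_iff_disj)
      ultimately have "s \<in> Ej j" using sJ n unfolding Ej_def by auto
      then show "s \<in> (\<Union>j. Ej j)" by blast
    qed
    moreover have "E \<notin> null_sets lebesgue" using nn unfolding E_def .
    ultimately obtain j where Sj: "Ej j \<notin> null_sets lebesgue"
      using null_sets_UN[of Ej lebesgue] null_sets_subset[OF _ Es] by blast
    define S where "S = Ej j"
    define jj where "jj = real j"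
    have SJ: "S \<subseteq> J" unfolding S_def Ej_def by auto
    have Sab: "S \<subseteq> {a..b}" using SJ unfolding J_def by auto
    have Sl: "S \<in> lmeasurable"
      by (rule bounded_set_imp_lmeasurable[OF bounded_subset[OF bounded_closed_interval Sab]]) (simp add: S_def Ejs)
    have Spos: "0 < measure lebesgue S"
    proof -
      have "\<not> negligible S" using Sj unfolding S_def negligible_iff_null_sets .
      then have "measure lebesgue S \<noteq> 0" using Sl negligible_iff_measure by blast
      then show ?thesis using measure_nonneg[of lebesgue S] by linarith
    qed
    have Sprop: "1 / real (Suc j) \<le> c \<bullet> Hf s" "norm (Hf s) \<le> jj" if "s \<in> S" for s
      using that HIJ[of s] SJ unfolding S_def Ej_def jj_def by auto
    have hd: "(h has_derivative (\<lambda>w. g \<bullet> w)) (at z0)"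
      unfolding g_def by (rule grad_deriv) (use reg in \<open>simp add: h_def z0_def\<close>)
    define K1 where "K1 = real CARD('n) * real CARD('n) * norm (Phi 1)"
    have K1: "0 \<le> K1" unfolding K1_def by simp
    have jj0: "0 \<le> jj" unfolding jj_def by simp
    have Kj: "0 \<le> K1 * jj" using K1 jj0 by simp
    define e where "e = 1 / (2 * real (Suc j) * (K1 * jj + 1))"
    have e0: "e > 0" unfolding e_def using Kj by (simp add: add_nonneg_pos)
    obtain d where d: "d > 0" and dd: "\<And>y. norm (y - z0) < d \<Longrightarrow> norm (h y - h z0 - g \<bullet> (y - z0)) \<le> e * norm (y - z0)"
      using hd[unfolded has_derivative_at_alt] e0 by blast
    define eta where "eta = d / (2 * (K1 * jj + 1))"
    have eta0: "eta > 0" unfolding eta_def using d Kj by (simp add: add_nonneg_pos)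
    obtain S' where S': "S' \<in> sets lebesgue" "S' \<subseteq> S" "0 < measure lebesgue S'" "measure lebesgue S' \<le> eta"
      using small_subset[OF _ Sab Spos eta0] Ejs unfolding S_def by blast
    define m' where "m' = measure lebesgue S'"
    have S'J: "S' \<subseteq> J" using S'(2) SJ by auto
    have S'l: "S' \<in> lmeasurable"
      by (rule bounded_set_imp_lmeasurable[OF bounded_subset[OF bounded_closed_interval] S'(1)])
        (use S'(2) Sab in auto)
    define u' where "u' = (\<lambda>t. if t \<in> S' then v else u0 t)"
    have adm': "admissible V u'" unfolding u'_def by (rule adm_perturb[OF adm0 v S'(1)])
    have same: "zvec Phi B ts u' i = zvec Phi B ts u0 i" if i: "i \<in> {1..N} - {k}" for i
    proof (rule zvec_same)
      fix s assume s: "s \<in> {ts (i - 1)..<ts i}"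
      have "s \<notin> J"
      proof (cases "i < k")
        case True
        then have "ts i \<le> a" unfolding a_def using ts_mono_le[of N ts, OF mono, of i "k - 1"] k by auto
        then show ?thesis using s unfolding J_def by auto
      next
        case False
        then have "k < i" using i by auto
        then have "b \<le> ts (i - 1)" unfolding b_def using ts_mono_le[of N ts, OF mono, of k "i - 1"] i by auto
        then show ?thesis using s unfolding J_def by auto
      qed
      then show "u' s = u0 s" using S'J unfolding u'_def by auto
    qed
    have obj': "objective M N xi ts Phi B f x0 Q u' = h (zvec Phi B ts u' k)"
      unfolding h_def by (rule obj_split[OF k same])
    have obj0: "objective M N xi ts Phi B f x0 Q u0 = h z0"
      unfolding h_def z0_def by (rule obj_split[OF k]) simp
    define X where "X = (LINT s:S'|lebesgue. Hf s)"
    define del where "del = Phi 1 *v X"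
    have zk: "zvec Phi B ts u' k = z0 + del"
      unfolding u'_def z0_def del_def X_def Hf_def
      by (rule zvec_perturb[OF _ S'(1) _ G0m Hm]) (use a0 b1 S'J in \<open>auto simp: a_def b_def J_def\<close>)
    have HS': "set_integrable lebesgue S' Hf"
      by (rule set_integrable_subset[OF Hm[folded Hf_def] S'(1)]) (use S'J J01 in auto)
    have cHS': "set_integrable lebesgue S' (\<lambda>s. c \<bullet> Hf s)"
      using integrable_inner_right[of c, OF HS'[unfolded set_integrable_def]] unfolding set_integrable_def by simp
    have nHS': "set_integrable lebesgue S' (\<lambda>s. norm (Hf s))"
      using integrable_norm[OF HS'[unfolded set_integrable_def]] unfolding set_integrable_def by simp
    have cst: "set_integrable lebesgue S' (\<lambda>s. r)" for r :: real
      by (rule absolutely_integrable_on_const[OF S'l])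
    have fin': "emeasure lebesgue S' \<noteq> \<infinity>" using fmeasurableD2[OF S'l] by (metis infinity_ennreal_def)
    have gdel: "g \<bullet> del = (LINT s:S'|lebesgue. c \<bullet> Hf s)"
    proof -
      have "g \<bullet> del = c \<bullet> X" unfolding del_def c_def transpose_inner ..
      also have "\<dots> = (LINT s|lebesgue. c \<bullet> (indicator S' s *\<^sub>R Hf s))"
        unfolding X_def set_lebesgue_integral_def
        by (rule integral_inner_right[symmetric]) (use HS' in \<open>simp add: set_integrable_def\<close>)
      also have "\<dots> = (LINT s:S'|lebesgue. c \<bullet> Hf s)"
        unfolding set_lebesgue_integral_def by simp
      finally show ?thesis .
    qed
    have lowb: "m' / real (Suc j) \<le> g \<bullet> del"
    proof -
      have "(LINT s:S'|lebesgue. 1 / real (Suc j)) \<le> (LINT s:S'|lebesgue. c \<bullet> Hf s)"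
        by (rule set_integral_mono[OF cst cHS']) (use Sprop S'(2) in auto)
      moreover have "(LINT s:S'|lebesgue. 1 / real (Suc j)) = m' / real (Suc j)"
        unfolding set_integral_const[OF S'(1) fin'] m'_def by simp
      ultimately show ?thesis using gdel by simp
    qed
    have normX: "norm X \<le> jj * m'"
    proof -
      have "norm X \<le> (LINT s:S'|lebesgue. norm (Hf s))" unfolding X_def by (rule set_integral_norm_bound[OF HS'])
      also have "\<dots> \<le> (LINT s:S'|lebesgue. jj)"
        by (rule set_integral_mono[OF nHS' cst]) (use Sprop S'(2) in auto)
      also have "\<dots> = jj * m'"
        unfolding set_integral_const[OF S'(1) fin'] m'_def by simp
      finally show ?thesis .
    qed
    have normdel: "norm del \<le> K1 * jj * m'"
    proof -
      have "norm del \<le> K1 * norm X" unfolding del_def K1_def by (rule mv_bound2)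
      also have "\<dots> \<le> K1 * (jj * m')" by (rule mult_left_mono[OF normX K1])
      finally show ?thesis by (simp add: mult.assoc)
    qed
    have m'0: "0 < m'" unfolding m'_def using S'(3) .
    have m'eta: "m' \<le> eta" unfolding m'_def using S'(4) .
    have "K1 * jj * m' \<le> K1 * jj * eta" using m'eta Kj by (rule mult_left_mono)
    also have "\<dots> < d"
    proof -
      have eq: "K1 * jj * eta = d * ((K1 * jj) / (2 * (K1 * jj + 1)))" unfolding eta_def by (simp add: field_simps)
      have "(K1 * jj) / (2 * (K1 * jj + 1)) < 1" using Kj by (simp add: field_simps)
      then have "d * ((K1 * jj) / (2 * (K1 * jj + 1))) < d * 1" by (intro mult_strict_left_mono d)
      then show ?thesis using eq by simp
    qed
    finally have small: "norm del < d" using normdel by linarith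
    have "norm (h (z0 + del) - h z0 - g \<bullet> del) \<le> e * norm del"
      using dd[of "z0 + del"] small by simp
    also have "\<dots> \<le> e * (K1 * jj * m')" using normdel e0 by (intro mult_left_mono) auto
    also have "\<dots> \<le> m' / (2 * real (Suc j))"
    proof -
      have "e * (K1 * jj * m') = (K1 * jj) / (K1 * jj + 1) * (m' / (2 * real (Suc j)))"
        unfolding e_def by (simp add: field_simps)
      also have "\<dots> \<le> 1 * (m' / (2 * real (Suc j)))"
        using Kj m'0 by (intro mult_right_mono) auto
      finally show ?thesis by simp
    qed
    finally have bnd: "norm (h (z0 + del) - h z0 - g \<bullet> del) \<le> m' / (2 * real (Suc j))" .
    have "h (z0 + del) \<le> h z0" using opt[OF adm'] obj' obj0 zk by simp
    then have "g \<bullet> del \<le> m' / (2 * real (Suc j))" using bnd by (simp add: abs_le_iff)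
    moreover have "m' / (2 * real (Suc j)) < m' / real (Suc j)"
      using m'0 by (intro divide_strict_left_mono) auto
    ultimately show False using lowb by linarith
  qed
qed

theorem theorem4:
  fixes M :: "'w measure"
    and N :: nat
    and xi :: "nat \<Rightarrow> 'w \<Rightarrow> real"
    and ts :: "nat \<Rightarrow> real"
    and A :: "real \<Rightarrow> real^'n^'n"
    and B :: "real \<Rightarrow> real^'m^'n"
    and f :: "real \<Rightarrow> real^'n"
    and x0 :: "real^'n"
    and Q :: "(real^'n) set"
    and V :: "(real^'m) set"
    and Phi :: "real \<Rightarrow> real^'n^'n"
    and u0 :: "real \<Rightarrow> real^'m"
    and thetak :: "nat \<Rightarrow> real \<Rightarrow> real^'n"
  assumes "prob_space M" and "complete_measure M"
    and "\<And>i. i \<in> {1..N} \<Longrightarrow> xi i \<in> borel_measurable M"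
    and "N \<ge> 1" and "ts 0 = 0" and "ts N = 1" and "\<And>i. i < N \<Longrightarrow> ts i < ts (Suc i)"
    and "\<And>i j. set_integrable lebesgue {0..1} (\<lambda>s. A s $ i $ j)"
    and "\<And>i j. set_integrable lebesgue {0..1} (\<lambda>s. B s $ i $ j)"
    and "\<And>i j. set_integrable lebesgue {0..1} (\<lambda>s. (B s $ i $ j)\<^sup>2)"
    and "\<And>i. set_integrable lebesgue {0..1} (\<lambda>s. f s $ i)"
    and "Q \<in> sets borel"
    and "is_fundamental_matrix A Phi"
    and "admissible V u0"
    and "\<And>u. admissible V u \<Longrightarrow>
           objective M N xi ts Phi B f x0 Q u \<le> objective M N xi ts Phi B f x0 Q u0"
    and "regular_for M N xi ts Phi B f x0 Q u0"
    and "\<And>k. k \<in> {1..N} \<Longrightarrow> is_adjoint_solution A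
           (gradient (hfun M N xi ts Phi B f x0 Q u0 k) (zvec Phi B ts u0 k)) (thetak k)"
  shows "AE t in lebesgue. t \<in> {0..1} \<longrightarrow>
           (let theta = (\<Sum>k\<in>{1..N}. indicator {ts (k - 1)..<ts k} t *\<^sub>R thetak k t)
            in is_arg_max (\<lambda>v. theta \<bullet> (B t *v v)) (\<lambda>v. v \<in> V) (u0 t))"
proof -
  note mono = assms(7)
  have Aabs: "A absolutely_integrable_on {0..1}" by (intro abs_int_vec assms(8))
  have Babs: "B absolutely_integrable_on {0..1}" by (intro abs_int_vec assms(9))
  have u0V: "\<forall>t\<in>{0..1}. u0 t \<in> V" and u0m: "set_borel_measurable lebesgue {0..1} u0"
    and u02: "set_integrable lebesgue {0..1::real} (\<lambda>t. (norm (u0 t))\<^sup>2)"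
    using assms(14) unfolding admissible_def by auto
  have Finv: "\<And>t. t \<in> {0..1} \<Longrightarrow> invertible (Phi t)" by (rule fund_invertible[OF assms(13) Aabs])
  have Mc: "continuous_on {0..1} (\<lambda>s. matrix_inv (Phi s))"
    by (rule minv_cont[OF fund_hk(1)[OF assms(13) Aabs] Finv])
  have Bu: "(\<lambda>s. B s *v u0 s) absolutely_integrable_on {0..1}"
    by (rule Bu_absint[OF assms(9) assms(10) u0m u02])
  have G0m: "(\<lambda>s. matrix_inv (Phi s) *v (B s *v u0 s)) absolutely_integrable_on {0..1}"
    by (rule cont_mv_absint[OF Mc _ _ Bu]) auto
  have Hm: "(\<lambda>s. matrix_inv (Phi s) *v (B s *v (v - u0 s))) absolutely_integrable_on {0..1}" for v
  proof -
    have Bv: "(\<lambda>s. B s *v v) absolutely_integrable_on {0..1}"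
      by (rule prod_mv_absint[OF continuous_on_const]) (use Babs in auto)
    have "(\<lambda>s. B s *v v - B s *v u0 s) absolutely_integrable_on {0..1}"
      by (rule set_integral_diff(1)[OF Bv Bu])
    then have Bd: "(\<lambda>s. B s *v (v - u0 s)) absolutely_integrable_on {0..1}"
      by (simp add: matrix_vector_mult_diff_distrib)
    show ?thesis by (rule cont_mv_absint[OF Mc _ _ Bd]) auto
  qed
  have null: "{s \<in> {ts (k - 1)<..<ts k}. 0 < thetak k s \<bullet> (B s *v (v - u0 s))} \<in> null_sets lebesgue"
    if k: "k \<in> {1..N}" and v: "v \<in> V" for k v
  proof (rule key_null[OF assms(13) Aabs assms(14) assms(15) _ assms(17)[OF k] k mono assms(5) assms(6) Hm G0m v])
    show "hfun M N xi ts Phi B f x0 Q u0 k differentiable (at (zvec Phi B ts u0 k))"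
      using assms(16) k unfolding regular_for_def by blast
  qed
  obtain D where D: "countable D" "D \<subseteq> V" "V \<subseteq> closure D" using separable[of V] by blast
  define E where "E = (\<lambda>k v. {s \<in> {ts (k - 1)<..<ts k}. 0 < thetak k s \<bullet> (B s *v (v - u0 s))})"
  define Bad where "Bad = (\<Union>k\<in>{1..N}. \<Union>v\<in>D. E k v) \<union> ts ` {0..N}"
  have Bnull: "Bad \<in> null_sets lebesgue"
  proof -
    have "(\<Union>k\<in>{1..N}. \<Union>v\<in>D. E k v) \<in> null_sets lebesgue"
    proof (rule null_sets_UN')
      show "countable {1..N}" by simp
      fix k assume k: "k \<in> {1..N}"
      show "(\<Union>v\<in>D. E k v) \<in> null_sets lebesgue"
        by (rule null_sets_UN'[OF D(1)]) (use null[OF k] D(2) in \<open>auto simp: E_def\<close>)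
    qed
    moreover have "ts ` {0..N} \<in> null_sets lebesgue"
      by (rule null_sets_completionI[OF finite_imp_null_set_lborel]) simp
    ultimately show ?thesis unfolding Bad_def by (rule null_sets.Un)
  qed
  show ?thesis
  proof (rule AE_I'[OF Bnull], rule subsetI)
    fix t assume "t \<in> {t \<in> space lebesgue. \<not> (t \<in> {0..1} \<longrightarrow>
           (let theta = (\<Sum>k\<in>{1..N}. indicator {ts (k - 1)..<ts k} t *\<^sub>R thetak k t)
            in is_arg_max (\<lambda>v. theta \<bullet> (B t *v v)) (\<lambda>v. v \<in> V) (u0 t)))}"
    then have t: "t \<in> {0..1}" and nt: "\<not> is_arg_max (\<lambda>v. (\<Sum>k\<in>{1..N}. indicator {ts (k - 1)..<ts k} t *\<^sub>R thetak k t) \<bullet> (B t *v v)) (\<lambda>v. v \<in> V) (u0 t)"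
      by (auto simp: Let_def)
    show "t \<in> Bad"
    proof (rule ccontr)
      assume tB: "t \<notin> Bad"
      then have "t \<notin> ts ` {0..N}" unfolding Bad_def by auto
      then obtain k where k: "k \<in> {1..N}" "ts (k - 1) < t" "t < ts k"
        using cover[OF mono assms(5) assms(6) t] by blast
      define th where "th = thetak k t"
      have "(\<Sum>k\<in>{1..N}. indicator {ts (k - 1)..<ts k} t *\<^sub>R thetak k t) = th"
        unfolding th_def by (rule theta_sum[OF mono k])
      then have nt2: "\<not> is_arg_max (\<lambda>v. th \<bullet> (B t *v v)) (\<lambda>v. v \<in> V) (u0 t)" using nt by simp
      have "u0 t \<in> V" using u0V t by blast
      then obtain y where y: "y \<in> V" "th \<bullet> (B t *v u0 t) < th \<bullet> (B t *v y)"
        using nt2 unfolding is_arg_max_def by auto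
      define p where "p = th \<bullet> (B t *v (y - u0 t))"
      have p0: "p > 0" using y(2) unfolding p_def by (simp add: matrix_vector_mult_diff_distrib inner_diff_right)
      define KB where "KB = real CARD('n) * real CARD('m) * norm (B t)"
      have KB0: "0 \<le> norm th * KB" unfolding KB_def by simp
      define e where "e = p / (norm th * KB + 1)"
      have e0: "e > 0" unfolding e_def using p0 KB0 by (simp add: add_nonneg_pos)
      have "y \<in> closure D" using D(3) y(1) by auto
      then obtain w where w: "w \<in> D" "dist w y < e"
        using e0 unfolding closure_approachable by blast
      have "\<bar>th \<bullet> (B t *v (w - y))\<bar> \<le> norm th * norm (B t *v (w - y))" by (rule Cauchy_Schwarz_ineq2)
      also have "\<dots> \<le> norm th * (KB * norm (w - y))"
        unfolding KB_def by (intro mult_left_mono mv_bound2) simp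
      also have "\<dots> \<le> (norm th * KB) * e"
        using w(2) KB0 by (simp add: dist_norm mult.assoc[symmetric] mult_left_mono)
      also have "\<dots> < p"
      proof -
        have "(norm th * KB) * e < (norm th * KB + 1) * e" using e0 by simp
        also have "\<dots> = p" unfolding e_def using KB0 by simp
        finally show ?thesis .
      qed
      finally have small: "\<bar>th \<bullet> (B t *v (w - y))\<bar> < p" .
      have "th \<bullet> (B t *v (w - u0 t)) = p + th \<bullet> (B t *v (w - y))"
        unfolding p_def by (simp add: matrix_vector_mult_diff_distrib inner_diff_right)
      then have "0 < thetak k t \<bullet> (B t *v (w - u0 t))" using small unfolding th_def by linarith
      then have "t \<in> E k w" unfolding E_def using k by auto
      then have "t \<in> Bad" unfolding Bad_def using k w(1) by auto
      then show False using tB by simp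
    qed
  qed
qed

end
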